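(* Let $G$ be a finite, simple, connected, vertex-transitive $(q+1)$-regular graph with $n$ vertices and $m$ edges, let $a\in[0,1]$ and $b\in\mathbb R$, and set $\eta=(1-q)a+b(q+1)$ and $\sigma=b((1-q)a+bq)$. Then for complex $u$ with $|u|$ sufficiently small (principal branches of logarithms and powers), \[ \zeta_{a,b}(G,u)^{-1}=(1-b^2u^2)^{(q-1)/2}\exp\Big[\frac1n\sum_{\lambda\in\operatorname{Spec}(\mathbf P)}\log\{(1+\sigma u^2)-\eta u\lambda\}\Big] \] and \[ \zeta_{a,b}(G,u)^{-1}=(1-b^2u^2)^{(q-1)/2}\exp\Big[\frac1n\sum_{\lambda\in\operatorname{Spec}(\Delta)}\log\Big\{(1-\eta u+\sigma u^2)+\frac{\eta u}{q+1}\lambda\Big\}\Big], \] where the sums run over the eigenvalues of $\mathbf P=\mathbf P(G)$, respectively of the Laplacian $\Delta=\mathbf D-\mathbf A(G)$, counted with multiplicity.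
   Context: $D(G)$ is the set of $2m$ arcs of $G$ (for each edge $uv$, both $(u,v)$ and $(v,u)$); for $e=(u,v)$, $o(e)=u$, $t(e)=v$, $e^{-1}=(v,u)$. The weight $w:D(G)\times D(G)\to\mathbb C$ is $w(f,e)=(2/\deg t(f)-1)a+b$ if $t(f)=o(e)$ and $f\ne e^{-1}$, $w(f,e)=(2/\deg t(f)-1)a$ if $f=e^{-1}$, and $0$ otherwise. A cycle of length $r$ is a sequence $C=(e_1,\ldots,e_r)$ of arcs with $t(e_i)=o(e_{i+1})$ for $i<r$ and $t(e_r)=o(e_1)$ (backtracking allowed), with $w(C)=w(e_1,e_2)\cdots w(e_{r-1},e_r)w(e_r,e_1)$; it is an $x_0$-cycle if $o(e_1)=x_0$. Fixing a vertex $x_0$, the generalized $(a,b)$-zeta function is $\zeta_{a,b}(G,u)=\exp\big(\sum_{r\ge1}\frac{N^0_r}{r}u^r\big)$ with $N^0_r=\sum\{w(C)\mid C$ an $x_0$-cycle of length $r\}$. $G$ is vertex-transitive if its automorphism group acts transitively on vertices. $\mathbf P(G)$ has entries $P_{uv}=1/\deg u$ if $u,v$ adjacent and $0$ otherwise; $\mathbf D$ is the diagonal degree matrix and $\mathbf A(G)$ the adjacency matrix. *)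

theory Defs
  imports "HOL-Analysis.Analysis" "Jordan_Normal_Form.Char_Poly"
begin

definition simple_graph :: "'a set \<Rightarrow> ('a \<Rightarrow> 'a \<Rightarrow> bool) \<Rightarrow> bool" where
  "simple_graph V E \<longleftrightarrow> finite V \<and> (\<forall>u v. E u v \<longrightarrow> u \<in> V \<and> v \<in> V)
     \<and> (\<forall>u v. E u v \<longrightarrow> E v u) \<and> (\<forall>u. \<not> E u u)"

definition connected_graph :: "'a set \<Rightarrow> ('a \<Rightarrow> 'a \<Rightarrow> bool) \<Rightarrow> bool" where
  "connected_graph V E \<longleftrightarrow> V \<noteq> {} \<and> (\<forall>x\<in>V. \<forall>y\<in>V. E\<^sup>*\<^sup>* x y)"

definition vertex_transitive :: "'a set \<Rightarrow> ('a \<Rightarrow> 'a \<Rightarrow> bool) \<Rightarrow> bool" where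
  "vertex_transitive V E \<longleftrightarrow> (\<forall>x\<in>V. \<forall>y\<in>V. \<exists>f. bij_betw f V V
      \<and> (\<forall>u\<in>V. \<forall>v\<in>V. E u v \<longleftrightarrow> E (f u) (f v)) \<and> f x = y)"

definition deg :: "'a set \<Rightarrow> ('a \<Rightarrow> 'a \<Rightarrow> bool) \<Rightarrow> 'a \<Rightarrow> nat" where
  "deg V E v = card {w\<in>V. E v w}"

definition regular :: "'a set \<Rightarrow> ('a \<Rightarrow> 'a \<Rightarrow> bool) \<Rightarrow> nat \<Rightarrow> bool" where
  "regular V E k \<longleftrightarrow> (\<forall>v\<in>V. deg V E v = k)"

definition arcs :: "'a set \<Rightarrow> ('a \<Rightarrow> 'a \<Rightarrow> bool) \<Rightarrow> ('a \<times> 'a) set" where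
  "arcs V E = {(u,v). u \<in> V \<and> v \<in> V \<and> E u v}"

definition arc_weight :: "'a set \<Rightarrow> ('a \<Rightarrow> 'a \<Rightarrow> bool) \<Rightarrow> real \<Rightarrow> real \<Rightarrow> 'a \<times> 'a \<Rightarrow> 'a \<times> 'a \<Rightarrow> real" where
  "arc_weight V E a b f e =
     (if f = (snd e, fst e) then (2 / real (deg V E (snd f)) - 1) * a
      else if snd f = fst e then (2 / real (deg V E (snd f)) - 1) * a + b
      else 0)"

text \<open>x0-cycles of length r: lists of r arcs, consecutive, closed, starting at x0 (backtracking allowed).\<close>
definition x0_cycles :: "'a set \<Rightarrow> ('a \<Rightarrow> 'a \<Rightarrow> bool) \<Rightarrow> 'a \<Rightarrow> nat \<Rightarrow> ('a \<times> 'a) list set" where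
  "x0_cycles V E x0 r = {cs. length cs = r \<and> r \<ge> 1 \<and> set cs \<subseteq> arcs V E
      \<and> (\<forall>i. i + 1 < r \<longrightarrow> snd (cs ! i) = fst (cs ! (i + 1)))
      \<and> snd (cs ! (r - 1)) = fst (cs ! 0) \<and> fst (cs ! 0) = x0}"

definition cycle_weight :: "'a set \<Rightarrow> ('a \<Rightarrow> 'a \<Rightarrow> bool) \<Rightarrow> real \<Rightarrow> real \<Rightarrow> ('a \<times> 'a) list \<Rightarrow> real" where
  "cycle_weight V E a b cs =
     (\<Prod>i<length cs. arc_weight V E a b (cs ! i) (cs ! ((i + 1) mod length cs)))"

definition N0 :: "'a set \<Rightarrow> ('a \<Rightarrow> 'a \<Rightarrow> bool) \<Rightarrow> real \<Rightarrow> real \<Rightarrow> 'a \<Rightarrow> nat \<Rightarrow> real" where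
  "N0 V E a b x0 r = (\<Sum>C\<in>x0_cycles V E x0 r. cycle_weight V E a b C)"

definition zeta_ab :: "'a set \<Rightarrow> ('a \<Rightarrow> 'a \<Rightarrow> bool) \<Rightarrow> real \<Rightarrow> real \<Rightarrow> 'a \<Rightarrow> complex \<Rightarrow> complex" where
  "zeta_ab V E a b x0 u =
     exp (\<Sum>r. complex_of_real (N0 V E a b x0 (Suc r) / real (Suc r)) * u ^ Suc r)"

definition vlist :: "'a set \<Rightarrow> 'a list" where
  "vlist V = (SOME vs. distinct vs \<and> set vs = V)"

definition vmat :: "'a set \<Rightarrow> ('a \<Rightarrow> 'a \<Rightarrow> real) \<Rightarrow> real mat" where
  "vmat V M = mat (card V) (card V) (\<lambda>(i,j). M (vlist V ! i) (vlist V ! j))"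

definition Pmat :: "'a set \<Rightarrow> ('a \<Rightarrow> 'a \<Rightarrow> bool) \<Rightarrow> real mat" where
  "Pmat V E = vmat V (\<lambda>u v. if E u v then 1 / real (deg V E u) else 0)"

definition Lapmat :: "'a set \<Rightarrow> ('a \<Rightarrow> 'a \<Rightarrow> bool) \<Rightarrow> real mat" where
  "Lapmat V E = vmat V (\<lambda>u v. (if u = v then real (deg V E u) else 0) - (if E u v then 1 else 0))"

definition spec_sum :: "real mat \<Rightarrow> (complex \<Rightarrow> complex) \<Rightarrow> complex" where
  "spec_sum M f = (let p = char_poly (map_mat complex_of_real M) in
     \<Sum>z\<in>{z. poly p z = 0}. of_nat (order z p) * f z)"

end

theory Submission
  imports Defs "Jordan_Normal_Form.Schur_Decomposition"
begin


definition mtr :: "'a::comm_ring_1 mat \<Rightarrow> 'a" where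
  "mtr A = (\<Sum>i\<in>{0..<dim_row A}. A $$ (i,i))"

lemma mtr_mult_comm:
  fixes A B :: "'a::comm_ring_1 mat"
  assumes A: "A \<in> carrier_mat n k" and B: "B \<in> carrier_mat k n"
  shows "mtr (A * B) = mtr (B * A)"
proof -
  have "mtr (A * B) = (\<Sum>i\<in>{0..<n}. \<Sum>j\<in>{0..<k}. A $$ (i,j) * B $$ (j,i))"
    using A B by (simp add: mtr_def scalar_prod_def)
  also have "\<dots> = (\<Sum>j\<in>{0..<k}. \<Sum>i\<in>{0..<n}. B $$ (j,i) * A $$ (i,j))"
    by (subst sum.swap) (simp add: mult.commute)
  also have "\<dots> = mtr (B * A)"
    using A B by (simp add: mtr_def scalar_prod_def)
  finally show ?thesis .
qed

lemma sum_single: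
  assumes "finite A" "i \<in> A" "\<And>k. k \<in> A \<Longrightarrow> k \<noteq> i \<Longrightarrow> g k = 0"
  shows "sum g A = g i"
  using sum.mono_neutral_right[of A "{i}" g] assms by auto

lemma ut_mult:
  fixes A B :: "'a::comm_ring_1 mat"
  assumes A: "A \<in> carrier_mat N N" and B: "B \<in> carrier_mat N N"
    and uA: "upper_triangular A" and uB: "upper_triangular B"
  shows "upper_triangular (A * B) \<and> (\<forall>i<N. (A * B) $$ (i,i) = A $$ (i,i) * B $$ (i,i))"
proof (intro conjI allI impI)
  show "upper_triangular (A * B)"
  proof (rule upper_triangularI)
    fix i j assume ji: "j < i" and i: "i < dim_row (A * B)"
    have "(A * B) $$ (i,j) = (\<Sum>k\<in>{0..<N}. A $$ (i,k) * B $$ (k,j))"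
      using A B ji i by (simp add: scalar_prod_def)
    also have "\<dots> = 0"
    proof (rule sum.neutral, intro ballI)
      fix k assume k: "k \<in> {0..<N}"
      show "A $$ (i,k) * B $$ (k,j) = 0"
      proof (cases "k < i")
        case True then have "A $$ (i,k) = 0" using upper_triangularD[OF uA] A i by auto
        then show ?thesis by simp
      next
        case False then have "j < k" using ji by auto
        then have "B $$ (k,j) = 0" using upper_triangularD[OF uB] B k by auto
      then show ?thesis by simp
      qed
    qed
    finally show "(A * B) $$ (i,j) = 0" .
  qed
next
  fix i assume i: "i < N"
  have "(A * B) $$ (i,i) = (\<Sum>k\<in>{0..<N}. A $$ (i,k) * B $$ (k,i))"
    using A B i by (simp add: scalar_prod_def)
  also have "\<dots> = A $$ (i,i) * B $$ (i,i)"
  proof (rule sum_single)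
    fix k assume k: "k \<in> {0..<N}" "k \<noteq> i"
    show "A $$ (i,k) * B $$ (k,i) = 0"
    proof (cases "k < i")
      case True then have "A $$ (i,k) = 0" using upper_triangularD[OF uA] A i by auto
      then show ?thesis by simp
    next
      case False then have "i < k" using k by auto
      then have "B $$ (k,i) = 0" using upper_triangularD[OF uB] B k by auto
      then show ?thesis by simp
    qed
  qed (use i in auto)
  finally show "(A * B) $$ (i,i) = A $$ (i,i) * B $$ (i,i)" .
qed

lemma ut_pow:
  fixes T :: "'a::comm_ring_1 mat"
  assumes T: "T \<in> carrier_mat N N" and uT: "upper_triangular T"
  shows "upper_triangular (T ^\<^sub>m r) \<and> (\<forall>i<N. (T ^\<^sub>m r) $$ (i,i) = T $$ (i,i) ^ r)"
proof (induction r)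
  case 0
  then show ?case using T by auto
next
  case (Suc r)
  have c: "T ^\<^sub>m r \<in> carrier_mat N N" using T by auto
  from ut_mult[OF c T] Suc uT show ?case by auto
qed

lemma schur_complex:
  fixes A :: "complex mat"
  assumes A: "A \<in> carrier_mat N N"
  shows "\<exists>T P Q. similar_mat_wit A T P Q \<and> upper_triangular T \<and> T \<in> carrier_mat N N
     \<and> P \<in> carrier_mat N N \<and> Q \<in> carrier_mat N N"
proof -
  obtain es where es: "char_poly A = (\<Prod>a\<leftarrow>es. [:- a, 1:])"
    using char_poly_factorized[OF A] by blast
  obtain T P Q where sd: "schur_decomposition A es = (T,P,Q)"
    by (cases "schur_decomposition A es") auto
  from schur_decomposition[OF A es sd] have sim: "similar_mat_wit A T P Q" and ut: "upper_triangular T"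
    by auto
  from similar_mat_witD2[OF A sim] show ?thesis using sim ut by blast
qed

lemma sim_mtr_pow:
  fixes A T P Q :: "'a::comm_ring_1 mat"
  assumes A: "A \<in> carrier_mat N N" and sim: "similar_mat_wit A T P Q" and uT: "upper_triangular T"
  shows "mtr (A ^\<^sub>m r) = (\<Sum>i\<in>{0..<N}. T $$ (i,i) ^ r)"
proof -
  note w = similar_mat_witD2[OF A sim]
  have Tr: "T ^\<^sub>m r \<in> carrier_mat N N" using w by auto
  have "A ^\<^sub>m r = P * T ^\<^sub>m r * Q" by (rule similar_mat_wit_pow_id[OF sim])
  then have "mtr (A ^\<^sub>m r) = mtr ((P * T ^\<^sub>m r) * Q)" by simp
  also have "\<dots> = mtr (Q * (P * T ^\<^sub>m r))"
    by (rule mtr_mult_comm[of _ N N]) (use w Tr in auto)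
  also have "Q * (P * T ^\<^sub>m r) = (Q * P) * T ^\<^sub>m r"
    using assoc_mult_mat[of Q N N P N "T ^\<^sub>m r" N] w Tr by simp
  also have "\<dots> = T ^\<^sub>m r" using w Tr by simp
  finally show ?thesis using ut_pow[OF w(5) uT, of r] Tr w by (simp add: mtr_def)
qed

lemma sim_det_lin:
  fixes A T P Q :: "'a::comm_ring_1 mat"
  assumes A: "A \<in> carrier_mat N N" and sim: "similar_mat_wit A T P Q" and uT: "upper_triangular T"
  shows "det (x \<cdot>\<^sub>m 1\<^sub>m N + y \<cdot>\<^sub>m A) = (\<Prod>i\<in>{0..<N}. x + y * T $$ (i,i))"
    and "similar_mat_wit (x \<cdot>\<^sub>m 1\<^sub>m N + y \<cdot>\<^sub>m A) (x \<cdot>\<^sub>m 1\<^sub>m N + y \<cdot>\<^sub>m T) P Q"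
    and "upper_triangular (x \<cdot>\<^sub>m 1\<^sub>m N + y \<cdot>\<^sub>m T)"
proof -
  note w = similar_mat_witD2[OF A sim]
  let ?M = "x \<cdot>\<^sub>m 1\<^sub>m N + y \<cdot>\<^sub>m T"
  have M: "?M \<in> carrier_mat N N" using w by auto
  have eq: "x \<cdot>\<^sub>m 1\<^sub>m N + y \<cdot>\<^sub>m A = P * ?M * Q"
  proof -
    have "P * ?M = P * (x \<cdot>\<^sub>m 1\<^sub>m N) + P * (y \<cdot>\<^sub>m T)"
      using w by (intro mult_add_distrib_mat[of P N N]) auto
    also have "P * (x \<cdot>\<^sub>m 1\<^sub>m N) = x \<cdot>\<^sub>m P"
      using w mult_smult_distrib[of P N N "1\<^sub>m N" N x] by simp
    also have "P * (y \<cdot>\<^sub>m T) = y \<cdot>\<^sub>m (P * T)"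
      using w mult_smult_distrib[of P N N T N y] by simp
    finally have "P * ?M = x \<cdot>\<^sub>m P + y \<cdot>\<^sub>m (P * T)" .
    then have "P * ?M * Q = (x \<cdot>\<^sub>m P + y \<cdot>\<^sub>m (P * T)) * Q" by simp
    also have "\<dots> = x \<cdot>\<^sub>m (P * Q) + y \<cdot>\<^sub>m (P * T * Q)"
      using w by (simp add: add_mult_distrib_mat[of _ N N] mult_smult_assoc_mat[of _ N N])
    finally show ?thesis using w by simp
  qed
  show ut: "upper_triangular ?M" using uT w by (auto intro!: upper_triangularI simp: upper_triangularD[OF uT])
  have "det (x \<cdot>\<^sub>m 1\<^sub>m N + y \<cdot>\<^sub>m A) = det P * det ?M * det Q"
    unfolding eq using w M by (simp add: det_mult[of _ N])
  also have "det P * det Q = 1"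
    using det_mult[OF w(6) w(7)] w(1) by simp
  then have "det P * det ?M * det Q = det ?M" by (metis mult.assoc mult.commute mult_1)
  also have "det ?M = (\<Prod>i\<in>{0..<N}. x + y * T $$ (i,i))"
    using det_upper_triangular[OF ut M] w by (simp add: prod_list_diag_prod)
  finally show "det (x \<cdot>\<^sub>m 1\<^sub>m N + y \<cdot>\<^sub>m A) = (\<Prod>i\<in>{0..<N}. x + y * T $$ (i,i))" .
  show "similar_mat_wit (x \<cdot>\<^sub>m 1\<^sub>m N + y \<cdot>\<^sub>m A) ?M P Q"
    using w M eq by (auto simp: similar_mat_wit_def Let_def)
qed

lemma order_prod_linear:
  fixes z :: "'a::idom"
  shows "Polynomial.order z (\<Prod>a\<leftarrow>es. [:- a, 1:]) = count_list es z"
proof (induction es)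
  case Nil
  then show ?case by (simp add: order_0I)
next
  case (Cons a es)
  have nz: "(\<Prod>a\<leftarrow>es. [:- a, 1:]) \<noteq> (0::'a poly)"
    by (auto simp: prod_list_zero_iff)
  have "Polynomial.order z ([:- a, 1:] * (\<Prod>a\<leftarrow>es. [:- a, 1:])) = Polynomial.order z [:- a, 1:] + Polynomial.order z (\<Prod>a\<leftarrow>es. [:- a, 1:])"
  proof (rule order_mult)
    have "[:- a, 1:] \<noteq> (0::'a poly)" by simp
    then show "[:- a, 1:] * (\<Prod>a\<leftarrow>es. [:- a, 1:]) \<noteq> 0" using nz mult_eq_0_iff by blast
  qed
  moreover have "Polynomial.order z [:- a, 1:] = (if z = a then 1 else 0)"
  proof (cases "z = a")
    case True then show ?thesis using order_power_n_n[of a 1] by simp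
  next
    case False then have "poly [:- a, 1:] z \<noteq> 0" by simp
    then show ?thesis using False by (simp add: order_0I)
  qed
  ultimately show ?case using Cons by simp
qed

lemma sum_list_map_count:
  "sum_list (map f xs) = (\<Sum>x\<in>set xs. of_nat (count_list xs x) * (f x :: 'b::comm_semiring_1))"
proof (induction xs)
  case Nil then show ?case by simp
next
  case (Cons x xs)
  have "(\<Sum>y\<in>set (x # xs). of_nat (count_list (x # xs) y) * f y)
      = (\<Sum>y\<in>insert x (set xs). (if x = y then f y else 0) + of_nat (count_list xs y) * f y)"
    by (intro sum.cong) (auto simp: algebra_simps)
  also have "\<dots> = (\<Sum>y\<in>insert x (set xs). (if x = y then f y else 0)) + (\<Sum>y\<in>insert x (set xs). of_nat (count_list xs y) * f y)"
    by (rule sum.distrib)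
  also have "(\<Sum>y\<in>insert x (set xs). (if x = y then f y else 0)) = f x"
    by (simp add: sum.delta)
  also have "(\<Sum>y\<in>insert x (set xs). of_nat (count_list xs y) * f y) = (\<Sum>y\<in>set xs. of_nat (count_list xs y) * f y)"
    by (cases "x \<in> set xs") (auto simp: insert_absorb count_list_0_iff)
  finally show ?case using Cons by simp
qed

lemma spec_sum_linear:
  assumes cp: "char_poly (map_mat complex_of_real M) = (\<Prod>a\<leftarrow>es. [:- a, 1:])"
  shows "spec_sum M g = sum_list (map g es)"
proof -
  have roots: "{z. poly (\<Prod>a\<leftarrow>es. [:- a, 1:]) z = 0} = set es"
    by (induction es) auto
  show ?thesis
    unfolding spec_sum_def Let_def cp roots order_prod_linear
    by (simp add: sum_list_map_count)
qed

lemma sum_nth_distinct: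
  assumes "distinct xs"
  shows "(\<Sum>k\<in>{0..<length xs}. g (xs ! k)) = (\<Sum>e\<in>set xs. (g e :: 'b::comm_monoid_add))"
proof -
  have "(\<Sum>e\<in>set xs. g e) = sum_list (map g xs)"
    using assms by (simp add: sum_list_distinct_conv_sum_set)
  also have "\<dots> = (\<Sum>k\<in>{0..<length xs}. g (xs ! k))"
    by (simp add: sum_list_sum_nth)
  finally show ?thesis by simp
qed

lemma prod_pm1:
  fixes f :: "'i \<Rightarrow> complex" and t :: complex
  assumes fin: "finite I" and pm: "\<And>i. i \<in> I \<Longrightarrow> f i = 1 \<or> f i = -1" and s0: "(\<Sum>i\<in>I. f i) = 0"
  shows "(\<Prod>i\<in>I. 1 + t * f i) = (1 - t^2) ^ (card I div 2) \<and> even (card I)"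
proof -
  define P1 where "P1 = {i\<in>I. f i = 1}"
  define P2 where "P2 = {i\<in>I. f i \<noteq> 1}"
  have f1: "finite P1" "finite P2" using fin by (auto simp: P1_def P2_def)
  have un: "I = P1 \<union> P2" and dj: "P1 \<inter> P2 = {}" by (auto simp: P1_def P2_def)
  have m1: "\<And>i. i \<in> P2 \<Longrightarrow> f i = -1" using pm by (auto simp: P2_def)
  have "(\<Sum>i\<in>I. f i) = (\<Sum>i\<in>P1. f i) + (\<Sum>i\<in>P2. f i)"
    unfolding un using f1 dj by (rule sum.union_disjoint)
  also have "(\<Sum>i\<in>P1. f i) = of_nat (card P1)" by (simp add: P1_def)
  also have "(\<Sum>i\<in>P2. f i) = - of_nat (card P2)" using m1 by simp
  finally have "of_nat (card P1) = (of_nat (card P2) :: complex)" using s0 by simp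
  then have cc: "card P1 = card P2" using of_nat_eq_iff by blast
  have cI: "card I = card P1 + card P2" unfolding un using f1 dj by (simp add: card_Un_disjoint)
  have "(\<Prod>i\<in>I. 1 + t * f i) = (\<Prod>i\<in>P1. 1 + t * f i) * (\<Prod>i\<in>P2. 1 + t * f i)"
    unfolding un using f1 dj by (rule prod.union_disjoint)
  also have "(\<Prod>i\<in>P1. 1 + t * f i) = (1 + t) ^ card P1" by (simp add: P1_def)
  also have "(\<Prod>i\<in>P2. 1 + t * f i) = (1 - t) ^ card P2" using m1 by simp
  also have "(1 + t) ^ card P1 * (1 - t) ^ card P2 = (1 - t^2) ^ card P1"
    using cc by (simp add: power_mult_distrib[symmetric] power2_eq_square algebra_simps)
  finally show ?thesis using cI cc by simp
qed

locale RG =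
  fixes V :: "'v set" and E :: "'v \<Rightarrow> 'v \<Rightarrow> bool" and q :: nat
  assumes sg: "simple_graph V E" and reg: "regular V E (q + 1)"
begin

lemma finV: "finite V" using sg by (simp add: simple_graph_def)
lemma EV: "E u v \<Longrightarrow> u \<in> V \<and> v \<in> V" using sg by (simp add: simple_graph_def)
lemma Esym: "E u v \<Longrightarrow> E v u" using sg by (simp add: simple_graph_def)
lemma Eirr: "\<not> E u u" using sg by (simp add: simple_graph_def)
lemma degV: "v \<in> V \<Longrightarrow> deg V E v = q + 1" using reg by (simp add: regular_def)

definition vl where "vl = vlist V"
lemma vl: "distinct vl" "set vl = V" "length vl = card V"
proof -
  have "\<exists>vs. distinct vs \<and> set vs = V" using finite_distinct_list[OF finV] by blast
  then have *: "distinct vl \<and> set vl = V" unfolding vl_def vlist_def by (rule someI_ex)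
  then show "distinct vl" "set vl = V" by auto
  then show "length vl = card V" using distinct_card by fastforce
qed

lemma fin_arcs: "finite (arcs V E)"
proof -
  have "arcs V E \<subseteq> V \<times> V" by (auto simp: arcs_def)
  then show ?thesis using finV finite_subset by blast
qed

definition al where "al = (SOME xs. distinct xs \<and> set xs = arcs V E)"
lemma al: "distinct al" "set al = arcs V E" "length al = card (arcs V E)"
proof -
  have "\<exists>vs. distinct vs \<and> set vs = arcs V E" using finite_distinct_list[OF fin_arcs] by blast
  then have *: "distinct al \<and> set al = arcs V E" unfolding al_def by (rule someI_ex)
  then show "distinct al" "set al = arcs V E" by auto
  then show "length al = card (arcs V E)" using distinct_card by fastforce
qed

lemma card_arcs: "card (arcs V E) = card V * (q + 1)"
proof -
  have "arcs V E = Sigma V (\<lambda>v. {w\<in>V. E v w})" by (auto simp: arcs_def)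
  then have "card (arcs V E) = (\<Sum>v\<in>V. card {w\<in>V. E v w})"
    using finV by (simp add: card_SigmaI)
  also have "\<dots> = (\<Sum>v\<in>V. q + 1)" using degV by (intro sum.cong) (auto simp: deg_def)
  finally show ?thesis by simp
qed

abbreviation "n \<equiv> card V"
abbreviation "NA \<equiv> card (arcs V E)"

lemma sum_vl: "(\<Sum>k\<in>{0..<n}. g (vl ! k)) = (\<Sum>v\<in>V. g v)"
  using sum_nth_distinct[OF vl(1), of g] vl by simp
lemma sum_al: "(\<Sum>k\<in>{0..<NA}. g (al ! k)) = (\<Sum>e\<in>arcs V E. g e)"
  using sum_nth_distinct[OF al(1), of g] al by simp

lemma vl_in: "k < n \<Longrightarrow> vl ! k \<in> V" using vl nth_mem by fastforce
lemma al_in: "k < NA \<Longrightarrow> al ! k \<in> arcs V E" using al nth_mem by fastforce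
lemma vl_inj: "i < n \<Longrightarrow> j < n \<Longrightarrow> vl ! i = vl ! j \<longleftrightarrow> i = j"
  using vl nth_eq_iff_index_eq by metis
lemma al_inj: "i < NA \<Longrightarrow> j < NA \<Longrightarrow> al ! i = al ! j \<longleftrightarrow> i = j"
  using al nth_eq_iff_index_eq by metis

definition Sm :: "complex mat" where
  "Sm = mat NA n (\<lambda>(k,j). if snd (al ! k) = vl ! j then 1 else 0)"
definition Tm :: "complex mat" where
  "Tm = mat n NA (\<lambda>(i,k). if fst (al ! k) = vl ! i then 1 else 0)"
definition Jm :: "complex mat" where
  "Jm = mat NA NA (\<lambda>(k,l). if al ! k = (snd (al ! l), fst (al ! l)) then 1 else 0)"
definition Am :: "complex mat" where
  "Am = mat n n (\<lambda>(i,j). if E (vl ! i) (vl ! j) then 1 else 0)"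

lemma carriers[simp]: "Sm \<in> carrier_mat NA n" "Tm \<in> carrier_mat n NA" "Jm \<in> carrier_mat NA NA"
  "Am \<in> carrier_mat n n"
  by (auto simp: Sm_def Tm_def Jm_def Am_def)

lemma dims[simp]: "dim_row Sm = NA" "dim_col Sm = n" "dim_row Tm = n" "dim_col Tm = NA"
  "dim_row Jm = NA" "dim_col Jm = NA" "dim_row Am = n" "dim_col Am = n"
  by (auto simp: Sm_def Tm_def Jm_def Am_def)

lemma TS: "Tm * Sm = Am"
proof (rule eq_matI)
  fix i j assume i: "i < dim_row Am" and j: "j < dim_col Am"
  then have i: "i < n" and j: "j < n" by (auto simp: Am_def)
  have "(Tm * Sm) $$ (i,j) = (\<Sum>k\<in>{0..<NA}. (if fst (al ! k) = vl ! i then 1 else 0) * (if snd (al ! k) = vl ! j then 1 else 0))"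
    using i j by (simp add: Tm_def Sm_def scalar_prod_def)
  also have "\<dots> = (\<Sum>e\<in>arcs V E. (if e = (vl ! i, vl ! j) then 1 else 0))"
    by (subst sum_al[where g = "\<lambda>e. (if fst e = vl ! i then 1 else 0) * (if snd e = vl ! j then (1::complex) else 0)"])
       (intro sum.cong, auto)
  also have "\<dots> = (if E (vl ! i) (vl ! j) then 1 else 0)"
    using fin_arcs vl_in[OF i] vl_in[OF j] by (simp add: arcs_def)
  finally show "(Tm * Sm) $$ (i,j) = Am $$ (i,j)" using i j by (simp add: Am_def)
qed (auto simp: Am_def Tm_def Sm_def)

lemma swap_arcs: "e \<in> arcs V E \<Longrightarrow> (snd e, fst e) \<in> arcs V E"
  using Esym by (auto simp: arcs_def)

lemma JS: "Jm * Sm = mat NA n (\<lambda>(k,j). if fst (al ! k) = vl ! j then 1 else 0)"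
proof (rule eq_matI)
  fix k j assume k: "k < dim_row (mat NA n (\<lambda>(k,j). if fst (al ! k) = vl ! j then 1 else (0::complex)))"
    and j: "j < dim_col (mat NA n (\<lambda>(k,j). if fst (al ! k) = vl ! j then 1 else (0::complex)))"
  then have k: "k < NA" and j: "j < n" by auto
  have "(Jm * Sm) $$ (k,j) = (\<Sum>l\<in>{0..<NA}. (if al ! k = (snd (al ! l), fst (al ! l)) then 1 else 0) * (if snd (al ! l) = vl ! j then 1 else 0))"
    using k j by (simp add: Jm_def Sm_def scalar_prod_def)
  also have "\<dots> = (\<Sum>f\<in>arcs V E. (if f = (snd (al ! k), fst (al ! k)) then (if snd f = vl ! j then 1 else 0) else 0))"
    by (subst sum_al[where g = "\<lambda>f. (if al ! k = (snd f, fst f) then 1 else 0) * (if snd f = vl ! j then (1::complex) else 0)"])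
       (intro sum.cong, auto)
  also have "\<dots> = (if fst (al ! k) = vl ! j then 1 else 0)"
    using fin_arcs swap_arcs[OF al_in[OF k]] by (simp add: sum.delta)
  finally show "(Jm * Sm) $$ (k,j) = mat NA n (\<lambda>(k,j). if fst (al ! k) = vl ! j then 1 else (0::complex)) $$ (k,j)"
    using k j by simp
qed (auto simp: Jm_def Sm_def)

lemma card_out: "v \<in> V \<Longrightarrow> card {e\<in>arcs V E. fst e = v} = q + 1"
proof -
  assume v: "v \<in> V"
  have "{e\<in>arcs V E. fst e = v} = (\<lambda>w. (v,w)) ` {w\<in>V. E v w}"
    using v by (auto simp: arcs_def)
  then have "card {e\<in>arcs V E. fst e = v} = card {w\<in>V. E v w}"
    by (simp add: card_image inj_on_def)
  then show ?thesis using degV[OF v] by (simp add: deg_def)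
qed

lemma TJS: "Tm * (Jm * Sm) = of_nat (q + 1) \<cdot>\<^sub>m 1\<^sub>m n"
proof (rule eq_matI)
  fix i j assume i: "i < dim_row (of_nat (q + 1) \<cdot>\<^sub>m 1\<^sub>m n :: complex mat)"
    and j: "j < dim_col (of_nat (q + 1) \<cdot>\<^sub>m 1\<^sub>m n :: complex mat)"
  then have i: "i < n" and j: "j < n" by auto
  have "(Tm * (Jm * Sm)) $$ (i,j) = (\<Sum>k\<in>{0..<NA}. (if fst (al ! k) = vl ! i then 1 else 0) * (if fst (al ! k) = vl ! j then 1 else 0))"
    using i j by (simp add: JS Tm_def scalar_prod_def)
  also have "\<dots> = (\<Sum>e\<in>arcs V E. (if fst e = vl ! i then 1 else 0) * (if fst e = vl ! j then (1::complex) else 0))"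
    by (rule sum_al)
  also have "\<dots> = (if i = j then of_nat (q + 1) else 0)"
  proof (cases "i = j")
    case True
    have "(\<Sum>e\<in>arcs V E. (if fst e = vl ! i then 1 else 0) * (if fst e = vl ! j then (1::complex) else 0))
        = (\<Sum>e\<in>arcs V E. (if fst e = vl ! i then 1 else 0))"
      using True by (intro sum.cong) auto
    also have "\<dots> = (\<Sum>e\<in>{e\<in>arcs V E. fst e = vl ! i}. 1)"
      using sum.inter_filter[OF fin_arcs, of "\<lambda>_. (1::complex)" "\<lambda>e. fst e = vl ! i"] by simp
    also have "\<dots> = of_nat (q + 1)" using card_out[OF vl_in[OF i]] by simp
    finally show ?thesis using True by simp
  next
    case False
    then have "vl ! i \<noteq> vl ! j" using vl_inj i j by auto
    then show ?thesis using False by (intro trans[OF sum.neutral]) auto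
  qed
  finally show "(Tm * (Jm * Sm)) $$ (i,j) = (of_nat (q + 1) \<cdot>\<^sub>m 1\<^sub>m n :: complex mat) $$ (i,j)"
    using i j by simp
qed (auto simp: Tm_def JS)

lemma ST: "k < NA \<Longrightarrow> l < NA \<Longrightarrow> (Sm * Tm) $$ (k,l) = (if snd (al ! k) = fst (al ! l) then 1 else 0)"
proof -
  assume k: "k < NA" and l: "l < NA"
  have "(Sm * Tm) $$ (k,l) = (\<Sum>j\<in>{0..<n}. (if snd (al ! k) = vl ! j then 1 else 0) * (if fst (al ! l) = vl ! j then 1 else 0))"
    using k l by (simp add: Sm_def Tm_def scalar_prod_def)
  also have "\<dots> = (\<Sum>v\<in>V. (if snd (al ! k) = v then (if fst (al ! l) = v then 1 else 0) else (0::complex)))"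
    by (subst sum_vl[where g = "\<lambda>v. (if snd (al ! k) = v then 1 else 0) * (if fst (al ! l) = v then (1::complex) else 0)"])
       (intro sum.cong, auto)
  also have "\<dots> = (if snd (al ! k) = fst (al ! l) then 1 else 0)"
    using finV al_in[OF k] by (auto simp: sum.delta arcs_def)
  finally show ?thesis .
qed

lemma JJ: "Jm * Jm = 1\<^sub>m NA"
proof (rule eq_matI)
  fix k m assume k: "k < dim_row (1\<^sub>m NA :: complex mat)" and m: "m < dim_col (1\<^sub>m NA :: complex mat)"
  then have k: "k < NA" and m: "m < NA" by auto
  have "(Jm * Jm) $$ (k,m) = (\<Sum>l\<in>{0..<NA}. (if al ! k = (snd (al ! l), fst (al ! l)) then 1 else 0) * (if al ! l = (snd (al ! m), fst (al ! m)) then 1 else 0))"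
    using k m by (simp add: Jm_def scalar_prod_def)
  also have "\<dots> = (\<Sum>f\<in>arcs V E. (if f = (snd (al ! m), fst (al ! m)) then (if al ! k = (snd f, fst f) then 1 else 0) else (0::complex)))"
    by (subst sum_al[where g = "\<lambda>f. (if al ! k = (snd f, fst f) then 1 else 0) * (if f = (snd (al ! m), fst (al ! m)) then (1::complex) else 0)"])
       (intro sum.cong, auto)
  also have "\<dots> = (if al ! k = al ! m then 1 else 0)"
    using fin_arcs swap_arcs[OF al_in[OF m]] by (simp add: sum.delta)
  finally show "(Jm * Jm) $$ (k,m) = (1\<^sub>m NA :: complex mat) $$ (k,m)"
    using k m al_inj by simp
qed (auto simp: Jm_def)

lemma KL:
  fixes t :: complex
  shows "(1\<^sub>m NA + t \<cdot>\<^sub>m Jm) * (1\<^sub>m NA + (-t) \<cdot>\<^sub>m Jm) = (1 - t^2) \<cdot>\<^sub>m 1\<^sub>m NA"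
proof -
  let ?L = "1\<^sub>m NA + (-t) \<cdot>\<^sub>m Jm"
  have L: "?L \<in> carrier_mat NA NA" by simp
  have "(1\<^sub>m NA + t \<cdot>\<^sub>m Jm) * ?L = 1\<^sub>m NA * ?L + (t \<cdot>\<^sub>m Jm) * ?L"
    by (rule add_mult_distrib_mat[of _ NA NA _ _ NA]) auto
  also have "(t \<cdot>\<^sub>m Jm) * ?L = t \<cdot>\<^sub>m (Jm * ?L)"
    by (rule mult_smult_assoc_mat[of _ NA NA _ NA]) auto
  also have "Jm * ?L = Jm * 1\<^sub>m NA + Jm * ((-t) \<cdot>\<^sub>m Jm)"
    by (rule mult_add_distrib_mat[of _ NA NA]) auto
  also have "Jm * ((-t) \<cdot>\<^sub>m Jm) = (-t) \<cdot>\<^sub>m (Jm * Jm)"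
    by (rule mult_smult_distrib[of _ NA NA _ NA]) auto
  also have "Jm * Jm = 1\<^sub>m NA" by (rule JJ)
  finally show ?thesis
    by (intro eq_matI) (auto simp: algebra_simps power2_eq_square Jm_def)
qed

definition Wc :: "real \<Rightarrow> real \<Rightarrow> complex mat" where
  "Wc a b = mat NA NA (\<lambda>(k,l). complex_of_real (arc_weight V E a b (al ! k) (al ! l)))"

lemma Wc_carrier[simp]: "Wc a b \<in> carrier_mat NA NA" by (simp add: Wc_def)
lemma Wc_dims[simp]: "dim_row (Wc a b) = NA" "dim_col (Wc a b) = NA" by (simp_all add: Wc_def)

lemma W_entry:
  assumes k: "k < NA" and l: "l < NA"
  shows "Wc a b $$ (k,l) = complex_of_real ((2 / real (q + 1) - 1) * a + b) * (Sm * Tm) $$ (k,l)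
     - complex_of_real b * Jm $$ (k,l)"
proof -
  have dg: "deg V E (snd (al ! k)) = q + 1" using al_in[OF k] degV by (auto simp: arcs_def)
  have dg2: "deg V E (fst (al ! l)) = q + 1" using al_in[OF l] degV by (auto simp: arcs_def)
  show ?thesis
    using k l by (subst ST[OF k l]) (auto simp: Wc_def arc_weight_def Jm_def dg dg2)
qed

lemma Pc: "map_mat complex_of_real (Pmat V E) = (1 / of_nat (q + 1)) \<cdot>\<^sub>m Am"
proof (rule eq_matI)
  fix i j assume "i < dim_row ((1 / of_nat (q + 1)) \<cdot>\<^sub>m Am)" "j < dim_col ((1 / of_nat (q + 1)) \<cdot>\<^sub>m Am)"
  then have i: "i < n" and j: "j < n" by (auto simp: Am_def)
  show "map_mat complex_of_real (Pmat V E) $$ (i,j) = ((1 / of_nat (q + 1)) \<cdot>\<^sub>m Am) $$ (i,j)"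
    using i j degV[OF vl_in[OF i]] by (simp add: Pmat_def vmat_def Am_def vl_def[symmetric])
qed (auto simp: Pmat_def vmat_def Am_def)

lemma Lc: "map_mat complex_of_real (Lapmat V E) = of_nat (q + 1) \<cdot>\<^sub>m 1\<^sub>m n + (-1) \<cdot>\<^sub>m Am"
proof (rule eq_matI)
  fix i j assume "i < dim_row (of_nat (q + 1) \<cdot>\<^sub>m 1\<^sub>m n + (-1) \<cdot>\<^sub>m Am :: complex mat)"
    "j < dim_col (of_nat (q + 1) \<cdot>\<^sub>m 1\<^sub>m n + (-1) \<cdot>\<^sub>m Am :: complex mat)"
  then have i: "i < n" and j: "j < n" by (auto simp: Am_def)
  show "map_mat complex_of_real (Lapmat V E) $$ (i,j) = (of_nat (q + 1) \<cdot>\<^sub>m 1\<^sub>m n + (-1) \<cdot>\<^sub>m Am :: complex mat) $$ (i,j)"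
    using i j degV[OF vl_in[OF i]] degV[OF vl_in[OF j]] vl_inj[OF i j] by (simp add: Lapmat_def vmat_def Am_def vl_def[symmetric])
qed (auto simp: Lapmat_def vmat_def Am_def)

lemma mtr_J: "mtr Jm = 0"
proof -
  have "\<And>k. k < NA \<Longrightarrow> al ! k \<noteq> (snd (al ! k), fst (al ! k))"
  proof
    fix k assume k: "k < NA" and "al ! k = (snd (al ! k), fst (al ! k))"
    then have "fst (al ! k) = snd (al ! k)" by (metis fst_conv snd_conv)
    with al_in[OF k] Eirr show False by (auto simp: arcs_def)
  qed
  then show ?thesis by (simp add: mtr_def Jm_def)
qed

lemma detK:
  fixes t :: complex
  shows "det (1\<^sub>m NA + t \<cdot>\<^sub>m Jm) = (1 - t^2) ^ (NA div 2)" and "even NA"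
proof -
  obtain T P Q where sim: "similar_mat_wit Jm T P Q" and uT: "upper_triangular T"
    and T: "T \<in> carrier_mat NA NA" and P: "P \<in> carrier_mat NA NA" and Q: "Q \<in> carrier_mat NA NA"
    using schur_complex[OF carriers(3)] by blast
  note w = similar_mat_witD2[OF carriers(3) sim]
  have "det (1 \<cdot>\<^sub>m 1\<^sub>m NA + t \<cdot>\<^sub>m Jm) = (\<Prod>i\<in>{0..<NA}. 1 + t * T $$ (i,i))"
    by (rule sim_det_lin(1)[OF carriers(3) sim uT])
  moreover have "1 \<cdot>\<^sub>m 1\<^sub>m NA = (1\<^sub>m NA :: complex mat)" by (intro eq_matI) auto
  ultimately have dK: "det (1\<^sub>m NA + t \<cdot>\<^sub>m Jm) = (\<Prod>i\<in>{0..<NA}. 1 + t * T $$ (i,i))" by simp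
  have J2: "Jm ^\<^sub>m 2 = 1\<^sub>m NA" using JJ by (simp add: numeral_2_eq_2)
  have T2: "T ^\<^sub>m 2 = 1\<^sub>m NA"
  proof -
    have T2c: "T ^\<^sub>m 2 \<in> carrier_mat NA NA" using T by simp
    have "Jm ^\<^sub>m 2 = P * T ^\<^sub>m 2 * Q" by (rule similar_mat_wit_pow_id[OF sim])
    then have e1: "P * T ^\<^sub>m 2 * Q = 1\<^sub>m NA" using J2 by simp
    have "Q * (P * T ^\<^sub>m 2 * Q) * P = Q * 1\<^sub>m NA * P" by (simp only: e1)
    also have "\<dots> = Q * P" using Q by simp
    finally have "Q * (P * T ^\<^sub>m 2 * Q) * P = Q * P" .
    also have "Q * (P * T ^\<^sub>m 2 * Q) * P = (Q * P) * T ^\<^sub>m 2 * (Q * P)"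
      using P Q T2c by (simp add: assoc_mult_mat[of _ NA NA _ NA _ NA])
    finally show ?thesis using w T2c by simp
  qed
  have pm: "\<And>i. i \<in> {0..<NA} \<Longrightarrow> T $$ (i,i) = 1 \<or> T $$ (i,i) = -1"
  proof -
    fix i assume "i \<in> {0..<NA}"
    then have i: "i < NA" by simp
    have "T $$ (i,i) ^ 2 = 1" using ut_pow[OF T uT, of 2] T2 i by simp
    then show "T $$ (i,i) = 1 \<or> T $$ (i,i) = -1" by (simp add: power2_eq_1_iff)
  qed
  have s0: "(\<Sum>i\<in>{0..<NA}. T $$ (i,i)) = 0"
    using sim_mtr_pow[OF carriers(3) sim uT, of 1] mtr_J by simp
  from prod_pm1[OF _ pm s0, of t] dK
  show "det (1\<^sub>m NA + t \<cdot>\<^sub>m Jm) = (1 - t^2) ^ (NA div 2)" "even NA" by auto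
qed

lemma block_det:
  fixes \<kappa> t :: complex
  defines "K \<equiv> 1\<^sub>m NA + t \<cdot>\<^sub>m Jm" and "L \<equiv> 1\<^sub>m NA + (-t) \<cdot>\<^sub>m Jm" and "d \<equiv> 1 - t^2"
  shows "det (K + (-\<kappa>) \<cdot>\<^sub>m (Sm * Tm)) * d ^ n
       = det (d \<cdot>\<^sub>m 1\<^sub>m n + (-\<kappa>) \<cdot>\<^sub>m (Am + (-t * of_nat (q+1)) \<cdot>\<^sub>m 1\<^sub>m n)) * det K"
proof -
  have K: "K \<in> carrier_mat NA NA" and L: "L \<in> carrier_mat NA NA" by (auto simp: K_def L_def)
  have KLd: "K * L = d \<cdot>\<^sub>m 1\<^sub>m NA" unfolding K_def L_def d_def by (rule KL)
  let ?M = "four_block_mat (1\<^sub>m n) (\<kappa> \<cdot>\<^sub>m Tm) Sm K"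
  have M: "?M \<in> carrier_mat (n + NA) (n + NA)" using K by auto
  let ?R1 = "four_block_mat (1\<^sub>m n) ((-\<kappa>) \<cdot>\<^sub>m Tm) (0\<^sub>m NA n) (1\<^sub>m NA)"
  have R1: "?R1 \<in> carrier_mat (n + NA) (n + NA)" by auto
  have MR1: "?M * ?R1 = four_block_mat (1\<^sub>m n) (0\<^sub>m n NA) Sm (K + (-\<kappa>) \<cdot>\<^sub>m (Sm * Tm))"
  proof -
    have "?M * ?R1 = four_block_mat (1\<^sub>m n * 1\<^sub>m n + (\<kappa> \<cdot>\<^sub>m Tm) * 0\<^sub>m NA n)
       (1\<^sub>m n * ((-\<kappa>) \<cdot>\<^sub>m Tm) + (\<kappa> \<cdot>\<^sub>m Tm) * 1\<^sub>m NA)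
       (Sm * 1\<^sub>m n + K * 0\<^sub>m NA n) (Sm * ((-\<kappa>) \<cdot>\<^sub>m Tm) + K * 1\<^sub>m NA)"
      by (rule mult_four_block_mat) (use K in auto)
    also have "1\<^sub>m n * 1\<^sub>m n + (\<kappa> \<cdot>\<^sub>m Tm) * 0\<^sub>m NA n = (1\<^sub>m n :: complex mat)"
      by (intro eq_matI) auto
    also have "1\<^sub>m n * ((-\<kappa>) \<cdot>\<^sub>m Tm) + (\<kappa> \<cdot>\<^sub>m Tm) * 1\<^sub>m NA = 0\<^sub>m n NA"
      by (intro eq_matI) auto
    also have "Sm * 1\<^sub>m n + K * 0\<^sub>m NA n = Sm"
      using K by (intro eq_matI) auto
    also have "Sm * ((-\<kappa>) \<cdot>\<^sub>m Tm) + K * 1\<^sub>m NA = K + (-\<kappa>) \<cdot>\<^sub>m (Sm * Tm)"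
      using K mult_smult_distrib[of Sm NA n Tm NA "-\<kappa>"] by (intro eq_matI) auto
    finally show ?thesis .
  qed
  have d1: "det (?M * ?R1) = det (K + (-\<kappa>) \<cdot>\<^sub>m (Sm * Tm))"
    unfolding MR1 by (subst det_four_block_mat_upper_right_zero[of _ n _ NA]) (use K in auto)
  have dR1: "det ?R1 = 1"
    by (subst det_four_block_mat_lower_left_zero[of _ n _ NA]) auto
  have detM1: "det ?M = det (K + (-\<kappa>) \<cdot>\<^sub>m (Sm * Tm))"
    using d1 det_mult[OF M R1] dR1 by simp
  let ?R2 = "four_block_mat (d \<cdot>\<^sub>m 1\<^sub>m n) (0\<^sub>m n NA) ((-1) \<cdot>\<^sub>m (L * Sm)) (1\<^sub>m NA)"
  have R2: "?R2 \<in> carrier_mat (n + NA) (n + NA)" using L by auto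
  have TLS: "Tm * (L * Sm) = Am + (-t * of_nat (q+1)) \<cdot>\<^sub>m 1\<^sub>m n"
  proof -
    have "L * Sm = 1\<^sub>m NA * Sm + ((-t) \<cdot>\<^sub>m Jm) * Sm"
      unfolding L_def by (rule add_mult_distrib_mat[of _ NA NA _ _ n]) auto
    also have "((-t) \<cdot>\<^sub>m Jm) * Sm = (-t) \<cdot>\<^sub>m (Jm * Sm)"
      by (rule mult_smult_assoc_mat[of _ NA NA _ n]) auto
    finally have "L * Sm = Sm + (-t) \<cdot>\<^sub>m (Jm * Sm)" by simp
    then have "Tm * (L * Sm) = Tm * (Sm + (-t) \<cdot>\<^sub>m (Jm * Sm))" by simp
    also have "\<dots> = Tm * Sm + Tm * ((-t) \<cdot>\<^sub>m (Jm * Sm))"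
      by (rule mult_add_distrib_mat[of _ n NA _ n]) auto
    also have "Tm * ((-t) \<cdot>\<^sub>m (Jm * Sm)) = (-t) \<cdot>\<^sub>m (Tm * (Jm * Sm))"
      by (rule mult_smult_distrib[of _ n NA _ n]) auto
    also note TS
    also note TJS
    finally show ?thesis by (intro eq_matI) (auto simp: Am_def)
  qed
  have MR2: "?M * ?R2 = four_block_mat (d \<cdot>\<^sub>m 1\<^sub>m n + (-\<kappa>) \<cdot>\<^sub>m (Am + (-t * of_nat (q+1)) \<cdot>\<^sub>m 1\<^sub>m n))
      (\<kappa> \<cdot>\<^sub>m Tm) (0\<^sub>m NA n) K"
  proof -
    have LS: "L * Sm \<in> carrier_mat NA n" using L by auto
    have "?M * ?R2 = four_block_mat (1\<^sub>m n * (d \<cdot>\<^sub>m 1\<^sub>m n) + (\<kappa> \<cdot>\<^sub>m Tm) * ((-1) \<cdot>\<^sub>m (L * Sm)))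
       (1\<^sub>m n * 0\<^sub>m n NA + (\<kappa> \<cdot>\<^sub>m Tm) * 1\<^sub>m NA)
       (Sm * (d \<cdot>\<^sub>m 1\<^sub>m n) + K * ((-1) \<cdot>\<^sub>m (L * Sm))) (Sm * 0\<^sub>m n NA + K * 1\<^sub>m NA)"
      by (rule mult_four_block_mat) (use K L in auto)
    also have "(\<kappa> \<cdot>\<^sub>m Tm) * ((-1) \<cdot>\<^sub>m (L * Sm)) = (-\<kappa>) \<cdot>\<^sub>m (Tm * (L * Sm))"
    proof -
      have "(\<kappa> \<cdot>\<^sub>m Tm) * ((-1) \<cdot>\<^sub>m (L * Sm)) = \<kappa> \<cdot>\<^sub>m (Tm * ((-1) \<cdot>\<^sub>m (L * Sm)))"
        by (rule mult_smult_assoc_mat[of _ n NA _ n]) (use LS in auto)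
      also have "Tm * ((-1) \<cdot>\<^sub>m (L * Sm)) = (-1) \<cdot>\<^sub>m (Tm * (L * Sm))"
        by (rule mult_smult_distrib[of _ n NA _ n]) (use LS in auto)
      finally have e: "(\<kappa> \<cdot>\<^sub>m Tm) * ((-1) \<cdot>\<^sub>m (L * Sm)) = \<kappa> \<cdot>\<^sub>m ((-1) \<cdot>\<^sub>m (Tm * (L * Sm)))" .
      show ?thesis unfolding e by (intro eq_matI) auto
    qed
    also have "1\<^sub>m n * (d \<cdot>\<^sub>m 1\<^sub>m n) + (-\<kappa>) \<cdot>\<^sub>m (Tm * (L * Sm))
        = d \<cdot>\<^sub>m 1\<^sub>m n + (-\<kappa>) \<cdot>\<^sub>m (Am + (-t * of_nat (q+1)) \<cdot>\<^sub>m 1\<^sub>m n)"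
      unfolding TLS by simp
    also have "1\<^sub>m n * 0\<^sub>m n NA + (\<kappa> \<cdot>\<^sub>m Tm) * 1\<^sub>m NA = \<kappa> \<cdot>\<^sub>m Tm"
      by (intro eq_matI) auto
    also have "Sm * 0\<^sub>m n NA + K * 1\<^sub>m NA = K"
      using K by (intro eq_matI) auto
    also have "Sm * (d \<cdot>\<^sub>m 1\<^sub>m n) + K * ((-1) \<cdot>\<^sub>m (L * Sm)) = 0\<^sub>m NA n"
    proof -
      have "K * ((-1) \<cdot>\<^sub>m (L * Sm)) = (-1) \<cdot>\<^sub>m (K * (L * Sm))"
        by (rule mult_smult_distrib[of _ NA NA _ n]) (use K LS in auto)
      also have "K * (L * Sm) = (K * L) * Sm"
        using K L by (simp add: assoc_mult_mat[of K NA NA L NA Sm n])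
      also have "(K * L) * Sm = d \<cdot>\<^sub>m Sm"
        unfolding KLd by (simp add: mult_smult_assoc_mat[of _ NA NA _ n])
      finally have e: "K * ((-1) \<cdot>\<^sub>m (L * Sm)) = (-1) \<cdot>\<^sub>m (d \<cdot>\<^sub>m Sm)" .
      have sd: "Sm * (d \<cdot>\<^sub>m 1\<^sub>m n) = d \<cdot>\<^sub>m Sm"
        using mult_smult_distrib[of Sm NA n "1\<^sub>m n" n d] by simp
      show ?thesis unfolding e sd by (intro eq_matI) auto
    qed
    finally show ?thesis .
  qed
  let ?D = "d \<cdot>\<^sub>m 1\<^sub>m n + (-\<kappa>) \<cdot>\<^sub>m (Am + (-t * of_nat (q+1)) \<cdot>\<^sub>m 1\<^sub>m n)"
  have D: "?D \<in> carrier_mat n n" by (auto simp: Am_def)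
  have d2: "det (?M * ?R2) = det ?D * det K"
    unfolding MR2 by (subst det_four_block_mat_lower_left_zero[of _ n _ NA]) (use K D in auto)
  have dR2: "det ?R2 = d ^ n"
    by (subst det_four_block_mat_upper_right_zero[of _ n _ NA]) (use L in auto)
  show ?thesis
    using d2 det_mult[OF M R2] dR2 detM1 by simp
qed


lemma det_identity:
  fixes u :: complex and a b :: real and TW PW QW TP PP QP :: "complex mat"
  assumes simW: "similar_mat_wit (Wc a b) TW PW QW" and uW: "upper_triangular TW"
    and simP: "similar_mat_wit (map_mat complex_of_real (Pmat V E)) TP PP QP" and uP: "upper_triangular TP"
  defines "\<eta> \<equiv> (1 - real q) * a + b * (real q + 1)"
    and "\<sigma> \<equiv> b * ((1 - real q) * a + b * real q)"
  shows "(\<Prod>j\<in>{0..<NA}. 1 + (-u) * TW $$ (j,j)) * (1 - (of_real b * u)^2) ^ n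
     = (1 - (of_real b * u)^2) ^ (NA div 2) * (\<Prod>i\<in>{0..<n}. (1 + of_real \<sigma> * u^2) + (- of_real \<eta> * u) * TP $$ (i,i))"
proof -
  define c' where "c' = (2 / real (q + 1) - 1) * a + b"
  have ce: "c' * (real q + 1) = \<eta>" unfolding c'_def \<eta>_def by (simp add: field_simps)
  have se: "b * \<eta> - b^2 = \<sigma>" unfolding \<sigma>_def \<eta>_def by (simp add: algebra_simps power2_eq_square)
  define t where "t = of_real b * u"
  define \<kappa> where "\<kappa> = u * of_real c'"
  define d where "d = 1 - t^2"
  have Pcar: "map_mat complex_of_real (Pmat V E) \<in> carrier_mat n n" by (simp add: Pc Am_def)
  have e1: "1\<^sub>m NA + t \<cdot>\<^sub>m Jm + (-\<kappa>) \<cdot>\<^sub>m (Sm * Tm) = 1 \<cdot>\<^sub>m 1\<^sub>m NA + (-u) \<cdot>\<^sub>m Wc a b"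
  proof (rule eq_matI)
    fix k l assume "k < dim_row (1 \<cdot>\<^sub>m 1\<^sub>m NA + (-u) \<cdot>\<^sub>m Wc a b)" "l < dim_col (1 \<cdot>\<^sub>m 1\<^sub>m NA + (-u) \<cdot>\<^sub>m Wc a b)"
    then have k: "k < NA" and l: "l < NA" by (auto simp: Wc_def)
    show "(1\<^sub>m NA + t \<cdot>\<^sub>m Jm + (-\<kappa>) \<cdot>\<^sub>m (Sm * Tm)) $$ (k,l) = (1 \<cdot>\<^sub>m 1\<^sub>m NA + (-u) \<cdot>\<^sub>m Wc a b) $$ (k,l)"
    proof -
      define X where "X = Sm * Tm"
      have Xd: "dim_row X = NA" "dim_col X = NA" by (simp_all add: X_def)
      have L0: "(1\<^sub>m NA + t \<cdot>\<^sub>m Jm + (-\<kappa>) \<cdot>\<^sub>m X) $$ (k,l) = (if k = l then 1 else 0) + t * Jm $$ (k,l) + (-\<kappa>) * X $$ (k,l)"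
        using k l Xd by simp
      have L: "(1\<^sub>m NA + t \<cdot>\<^sub>m Jm + (-\<kappa>) \<cdot>\<^sub>m (Sm * Tm)) $$ (k,l) = (if k = l then 1 else 0) + t * Jm $$ (k,l) + (-\<kappa>) * (Sm * Tm) $$ (k,l)"
        using L0 unfolding X_def .
      have R: "(1 \<cdot>\<^sub>m 1\<^sub>m NA + (-u) \<cdot>\<^sub>m Wc a b) $$ (k,l) = (if k = l then 1 else 0) + (-u) * Wc a b $$ (k,l)"
        using k l by simp
      show ?thesis unfolding L R W_entry[OF k l, of a b, folded c'_def]
        by (simp add: t_def \<kappa>_def algebra_simps)
    qed
  qed (auto simp: Wc_def)
  have e2: "d \<cdot>\<^sub>m 1\<^sub>m n + (-\<kappa>) \<cdot>\<^sub>m (Am + (-t * of_nat (q+1)) \<cdot>\<^sub>m 1\<^sub>m n)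
      = (1 + of_real \<sigma> * u^2) \<cdot>\<^sub>m 1\<^sub>m n + (- of_real \<eta> * u) \<cdot>\<^sub>m map_mat complex_of_real (Pmat V E)"
  proof (rule eq_matI)
    fix i j assume "i < dim_row ((1 + of_real \<sigma> * u^2) \<cdot>\<^sub>m 1\<^sub>m n + (- of_real \<eta> * u) \<cdot>\<^sub>m map_mat complex_of_real (Pmat V E))"
      "j < dim_col ((1 + of_real \<sigma> * u^2) \<cdot>\<^sub>m 1\<^sub>m n + (- of_real \<eta> * u) \<cdot>\<^sub>m map_mat complex_of_real (Pmat V E))"
    then have i: "i < n" and j: "j < n" using Pcar by auto
    have ce'': "complex_of_real \<eta> = of_real c' * of_nat (q + 1)"
    proof -
      have "complex_of_real \<eta> = complex_of_real (c' * (real q + 1))" by (simp only: ce)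
      also have "\<dots> = of_real c' * of_nat (q + 1)" by simp
      finally show ?thesis .
    qed
    have ce': "of_real \<eta> / of_nat (q + 1) = (of_real c' :: complex)"
    proof -
      have qnz: "(of_nat (q+1) :: complex) \<noteq> 0" by (simp only: of_nat_eq_0_iff)
      then have qnz': "1 + (of_nat q :: complex) \<noteq> 0" by simp
      show ?thesis using ce'' qnz' by simp
    qed
    have se': "d + \<kappa> * t * of_nat (q+1) = 1 + of_real \<sigma> * u^2"
    proof -
      have "d + \<kappa> * t * of_nat (q+1) = 1 + u^2 * (of_real b * (of_real c' * of_nat (q + 1)) - (of_real b)^2)"
        by (simp add: d_def \<kappa>_def t_def algebra_simps power2_eq_square)
      also have "of_real b * (of_real c' * of_nat (q + 1)) - (of_real b)^2 = (of_real (b * \<eta> - b^2) :: complex)"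
        using ce'' by simp
      also have "b * \<eta> - b^2 = \<sigma>" by (rule se)
      finally show ?thesis by (simp add: algebra_simps)
    qed
    define x where "x = Am $$ (i,j)"
    have lhs: "(d \<cdot>\<^sub>m 1\<^sub>m n + (-\<kappa>) \<cdot>\<^sub>m (Am + (-t * of_nat (q+1)) \<cdot>\<^sub>m 1\<^sub>m n)) $$ (i,j)
        = d * (if i = j then 1 else 0) + (-\<kappa>) * (x + (-t * of_nat (q+1)) * (if i = j then 1 else 0))"
      using i j by (simp add: x_def)
    have rhs: "((1 + of_real \<sigma> * u^2) \<cdot>\<^sub>m 1\<^sub>m n + (- of_real \<eta> * u) \<cdot>\<^sub>m map_mat complex_of_real (Pmat V E)) $$ (i,j)
        = (1 + of_real \<sigma> * u^2) * (if i = j then 1 else 0) + (- of_real \<eta> * u) * (1 / of_nat (q + 1) * x)"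
      using i j by (simp add: Pc x_def)
    have kx: "(-\<kappa>) * x = (- of_real \<eta> * u) * (1 / of_nat (q + 1) * x)"
      unfolding \<kappa>_def ce'[symmetric] by simp
    show "(d \<cdot>\<^sub>m 1\<^sub>m n + (-\<kappa>) \<cdot>\<^sub>m (Am + (-t * of_nat (q+1)) \<cdot>\<^sub>m 1\<^sub>m n)) $$ (i,j)
      = ((1 + of_real \<sigma> * u^2) \<cdot>\<^sub>m 1\<^sub>m n + (- of_real \<eta> * u) \<cdot>\<^sub>m map_mat complex_of_real (Pmat V E)) $$ (i,j)"
      unfolding lhs rhs kx[symmetric] using se' by (simp add: algebra_simps)
  qed (use Pcar in auto)
  have bd: "det (1\<^sub>m NA + t \<cdot>\<^sub>m Jm + (-\<kappa>) \<cdot>\<^sub>m (Sm * Tm)) * d ^ n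
       = det (d \<cdot>\<^sub>m 1\<^sub>m n + (-\<kappa>) \<cdot>\<^sub>m (Am + (-t * of_nat (q+1)) \<cdot>\<^sub>m 1\<^sub>m n)) * det (1\<^sub>m NA + t \<cdot>\<^sub>m Jm)"
    unfolding d_def by (rule block_det)
  have dW: "det (1 \<cdot>\<^sub>m 1\<^sub>m NA + (-u) \<cdot>\<^sub>m Wc a b) = (\<Prod>j\<in>{0..<NA}. 1 + (-u) * TW $$ (j,j))"
    by (rule sim_det_lin(1)[OF Wc_carrier simW uW])
  have dP: "det ((1 + of_real \<sigma> * u^2) \<cdot>\<^sub>m 1\<^sub>m n + (- of_real \<eta> * u) \<cdot>\<^sub>m map_mat complex_of_real (Pmat V E))
     = (\<Prod>i\<in>{0..<n}. (1 + of_real \<sigma> * u^2) + (- of_real \<eta> * u) * TP $$ (i,i))"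
    by (rule sim_det_lin(1)[OF Pcar simP uP])
  have bd2: "det (1 \<cdot>\<^sub>m 1\<^sub>m NA + (-u) \<cdot>\<^sub>m Wc a b) * d ^ n
     = det ((1 + of_real \<sigma> * u^2) \<cdot>\<^sub>m 1\<^sub>m n + (- of_real \<eta> * u) \<cdot>\<^sub>m map_mat complex_of_real (Pmat V E)) * d ^ (NA div 2)"
  proof -
    have x1: "det (1 \<cdot>\<^sub>m 1\<^sub>m NA + (-u) \<cdot>\<^sub>m Wc a b) = det (1\<^sub>m NA + t \<cdot>\<^sub>m Jm + (-\<kappa>) \<cdot>\<^sub>m (Sm * Tm))"
      by (simp only: e1)
    have x2: "det ((1 + of_real \<sigma> * u^2) \<cdot>\<^sub>m 1\<^sub>m n + (- of_real \<eta> * u) \<cdot>\<^sub>m map_mat complex_of_real (Pmat V E))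
       = det (d \<cdot>\<^sub>m 1\<^sub>m n + (-\<kappa>) \<cdot>\<^sub>m (Am + (-t * of_nat (q+1)) \<cdot>\<^sub>m 1\<^sub>m n))"
      by (simp only: e2)
    have bd': "det (1\<^sub>m NA + t \<cdot>\<^sub>m Jm + (-\<kappa>) \<cdot>\<^sub>m (Sm * Tm)) * d ^ n
       = det (d \<cdot>\<^sub>m 1\<^sub>m n + (-\<kappa>) \<cdot>\<^sub>m (Am + (-t * of_nat (q+1)) \<cdot>\<^sub>m 1\<^sub>m n)) * d ^ (NA div 2)"
      using bd detK(1)[of t] unfolding d_def by simp
    show ?thesis unfolding x1 x2 by (rule bd')
  qed
  show ?thesis
    using bd2 unfolding dW dP d_def t_def by (simp add: mult.commute)
qed

end




context RG begin

definition walks :: "nat \<Rightarrow> ('v \<times> 'v) list set" where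
  "walks r = {cs. set cs \<subseteq> arcs V E \<and> length cs = r}"

lemma fin_walks: "finite (walks r)"
  unfolding walks_def using finite_lists_length_eq[OF fin_arcs] by simp

lemma walks_Suc: "walks (Suc r) = (\<lambda>(x,ys). x # ys) ` (arcs V E \<times> walks r)"
proof (intro equalityI subsetI)
  fix cs assume "cs \<in> walks (Suc r)"
  then obtain x ys where "cs = x # ys" "x \<in> arcs V E" "ys \<in> walks r"
    unfolding walks_def by (cases cs) auto
  then show "cs \<in> (\<lambda>(x,ys). x # ys) ` (arcs V E \<times> walks r)" by force
qed (auto simp: walks_def)

lemma sum_walks_Suc:
  "(\<Sum>cs\<in>walks (Suc r). h cs) = (\<Sum>x\<in>arcs V E. \<Sum>ys\<in>walks r. h (x # ys))"
proof -
  have inj: "inj_on (\<lambda>(x,ys). x # ys) (arcs V E \<times> walks r)" by (auto simp: inj_on_def)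
  have "(\<Sum>cs\<in>walks (Suc r). h cs) = (\<Sum>p\<in>arcs V E \<times> walks r. h ((\<lambda>(x,ys). x # ys) p))"
    unfolding walks_Suc by (rule sum.reindex[OF inj, unfolded comp_def])
  also have "\<dots> = (\<Sum>x\<in>arcs V E. \<Sum>ys\<in>walks r. h (x # ys))"
    by (subst sum.cartesian_product) (rule sum.cong, auto)
  finally show ?thesis .
qed

definition aw :: "real \<Rightarrow> real \<Rightarrow> 'v \<times> 'v \<Rightarrow> 'v \<times> 'v \<Rightarrow> complex" where
  "aw a b e f = complex_of_real (arc_weight V E a b e f)"

fun pth :: "real \<Rightarrow> real \<Rightarrow> 'v \<times> 'v \<Rightarrow> ('v \<times> 'v) list \<Rightarrow> 'v \<times> 'v \<Rightarrow> complex" where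
  "pth a b x [] y = aw a b x y"
| "pth a b x (z # zs) y = aw a b x z * pth a b z zs y"

fun apw :: "real \<Rightarrow> real \<Rightarrow> nat \<Rightarrow> 'v \<times> 'v \<Rightarrow> 'v \<times> 'v \<Rightarrow> complex" where
  "apw a b 0 x y = aw a b x y"
| "apw a b (Suc r) x y = (\<Sum>z\<in>arcs V E. aw a b x z * apw a b r z y)"

lemma pth_prod: "(\<Prod>i<Suc (length ys). aw a b ((x # ys) ! i) ((x # ys @ [y]) ! Suc i)) = pth a b x ys y"
proof (induction ys arbitrary: x)
  case Nil then show ?case by simp
next
  case (Cons z zs)
  have "(\<Prod>i<Suc (length (z # zs)). aw a b ((x # z # zs) ! i) ((x # (z # zs) @ [y]) ! Suc i))
      = aw a b x z * (\<Prod>i<Suc (length zs). aw a b ((z # zs) ! i) ((z # zs @ [y]) ! Suc i))"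
    by (subst prod.lessThan_Suc_shift) simp
  also have "(\<Prod>i<Suc (length zs). aw a b ((z # zs) ! i) ((z # zs @ [y]) ! Suc i)) = pth a b z zs y"
    by (rule Cons.IH)
  finally show ?case by simp
qed

lemma cyc_pth:
  "complex_of_real (cycle_weight V E a b (x # ys)) = pth a b x ys x"
proof -
  have "complex_of_real (cycle_weight V E a b (x # ys))
     = (\<Prod>i<Suc (length ys). aw a b ((x # ys) ! i) ((x # ys) ! ((i + 1) mod Suc (length ys))))"
    by (simp add: cycle_weight_def aw_def)
  also have "\<dots> = (\<Prod>i<Suc (length ys). aw a b ((x # ys) ! i) ((x # ys @ [x]) ! Suc i))"
  proof (rule prod.cong)
    fix i assume "i \<in> {..<Suc (length ys)}"
    then have i: "i < Suc (length ys)" by simp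
    show "aw a b ((x # ys) ! i) ((x # ys) ! ((i + 1) mod Suc (length ys))) = aw a b ((x # ys) ! i) ((x # ys @ [x]) ! Suc i)"
    proof (cases "i = length ys")
      case True then show ?thesis by (simp add: nth_append)
    next
      case False
      then have "i + 1 < Suc (length ys)" using i by simp
      then show ?thesis using False i by (simp add: nth_append nth_Cons' del: nth_Cons_Suc)
    qed
  qed simp
  also have "\<dots> = pth a b x ys x" by (rule pth_prod)
  finally show ?thesis .
qed

lemma sum_pth: "(\<Sum>ys\<in>walks r. pth a b x ys y) = apw a b r x y"
proof (induction r arbitrary: x)
  case 0
  have "walks 0 = {[]}" by (auto simp: walks_def)
  then show ?case by simp
next
  case (Suc r)
  have "(\<Sum>ys\<in>walks (Suc r). pth a b x ys y) = (\<Sum>z\<in>arcs V E. \<Sum>zs\<in>walks r. aw a b x z * pth a b z zs y)"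
    by (simp add: sum_walks_Suc)
  also have "\<dots> = (\<Sum>z\<in>arcs V E. aw a b x z * apw a b r z y)"
    by (simp add: sum_distrib_left[symmetric] Suc)
  finally show ?case by simp
qed

lemma pow_mat_Suc_left:
  fixes A :: "'a::semiring_1 mat"
  assumes A: "A \<in> carrier_mat N N"
  shows "A ^\<^sub>m Suc k = A * A ^\<^sub>m k"
proof (induction k)
  case 0 then show ?case using A by simp
next
  case (Suc k)
  have "A ^\<^sub>m Suc (Suc k) = (A * A ^\<^sub>m k) * A" using Suc by simp
  also have "\<dots> = A * (A ^\<^sub>m k * A)" using A by (simp add: assoc_mult_mat[of _ N N _ N _ N])
  finally show ?case by simp
qed

lemma mult_entry:
  fixes A B :: "'a::semiring_0 mat"
  assumes "A \<in> carrier_mat nr m" "B \<in> carrier_mat m nc" "i < nr" "j < nc"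
  shows "(A * B) $$ (i,j) = (\<Sum>k\<in>{0..<m}. A $$ (i,k) * B $$ (k,j))"
  using assms by (simp add: scalar_prod_def)

lemma Wpow_entry: "k < NA \<Longrightarrow> l < NA \<Longrightarrow> (Wc a b ^\<^sub>m Suc r) $$ (k,l) = apw a b r (al ! k) (al ! l)"
proof (induction r arbitrary: k)
  case 0
  have "Wc a b ^\<^sub>m Suc 0 = 1\<^sub>m NA * Wc a b" by simp
  also have "\<dots> = Wc a b" by (rule left_mult_one_mat[OF Wc_carrier])
  finally show ?case using 0 by (simp add: Wc_def aw_def)
next
  case (Suc r)
  have c: "Wc a b ^\<^sub>m Suc r \<in> carrier_mat NA NA" using Wc_carrier by (simp only: carrier_mat_def pow_mat_dim) simp
  have "(Wc a b ^\<^sub>m Suc (Suc r)) $$ (k,l) = (Wc a b * Wc a b ^\<^sub>m Suc r) $$ (k,l)"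
    by (simp only: pow_mat_Suc_left[OF Wc_carrier])
  also have "\<dots> = (\<Sum>m\<in>{0..<NA}. Wc a b $$ (k,m) * (Wc a b ^\<^sub>m Suc r) $$ (m,l))"
    by (rule mult_entry[OF Wc_carrier c Suc.prems])
  also have "\<dots> = (\<Sum>m\<in>{0..<NA}. aw a b (al ! k) (al ! m) * apw a b r (al ! m) (al ! l))"
  proof (rule sum.cong)
    fix m assume "m \<in> {0..<NA}"
    then have m: "m < NA" by simp
    have "Wc a b $$ (k,m) = aw a b (al ! k) (al ! m)" using Suc.prems m by (simp add: Wc_def aw_def)
    moreover have "(Wc a b ^\<^sub>m Suc r) $$ (m,l) = apw a b r (al ! m) (al ! l)"
      by (rule Suc.IH[OF m Suc.prems(2)])
    ultimately show "Wc a b $$ (k,m) * (Wc a b ^\<^sub>m Suc r) $$ (m,l) = aw a b (al ! k) (al ! m) * apw a b r (al ! m) (al ! l)"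
      by simp
  qed simp
  also have "\<dots> = (\<Sum>z\<in>arcs V E. aw a b (al ! k) z * apw a b r z (al ! l))"
    by (rule sum_al)
  finally show ?case by simp
qed

lemma mtr_Wpow: "mtr (Wc a b ^\<^sub>m Suc r) = (\<Sum>cs\<in>walks (Suc r). complex_of_real (cycle_weight V E a b cs))"
proof -
  have "mtr (Wc a b ^\<^sub>m Suc r) = (\<Sum>k\<in>{0..<NA}. apw a b r (al ! k) (al ! k))"
  proof -
    have d: "dim_row (Wc a b ^\<^sub>m Suc r) = NA" by (simp only: pow_mat_dim Wc_dims)
    show ?thesis unfolding mtr_def d
      by (rule sum.cong) (simp_all add: Wpow_entry del: pow_mat.simps)
  qed
  also have "\<dots> = (\<Sum>x\<in>arcs V E. apw a b r x x)" by (rule sum_al)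
  also have "\<dots> = (\<Sum>x\<in>arcs V E. \<Sum>ys\<in>walks r. complex_of_real (cycle_weight V E a b (x # ys)))"
    by (simp add: cyc_pth sum_pth)
  also have "\<dots> = (\<Sum>cs\<in>walks (Suc r). complex_of_real (cycle_weight V E a b cs))"
    by (simp add: sum_walks_Suc)
  finally show ?thesis .
qed


lemma cw_zero:
  assumes R: "R \<ge> 1" and cs: "cs \<in> walks R" and i: "i < R"
    and ne: "snd (cs ! i) \<noteq> fst (cs ! ((i + 1) mod R))"
  shows "cycle_weight V E a b cs = 0"
proof -
  have len: "length cs = R" using cs by (simp add: walks_def)
  have "arc_weight V E a b (cs ! i) (cs ! ((i + 1) mod R)) = 0"
  proof -
    have "cs ! i \<noteq> (snd (cs ! ((i + 1) mod R)), fst (cs ! ((i + 1) mod R)))"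
      using ne by auto
    then show ?thesis using ne by (simp add: arc_weight_def)
  qed
  then show ?thesis unfolding cycle_weight_def len using i
    by (intro prod_zero) auto
qed

lemma x0_cycles_char:
  assumes R: "R \<ge> 1"
  shows "x0_cycles V E x R = {cs\<in>walks R. fst (cs ! 0) = x \<and> (\<forall>i<R. snd (cs ! i) = fst (cs ! ((i + 1) mod R)))}"
proof (intro equalityI subsetI)
  fix cs assume "cs \<in> x0_cycles V E x R"
  then have l: "length cs = R" and s: "set cs \<subseteq> arcs V E"
    and c: "\<forall>i. i + 1 < R \<longrightarrow> snd (cs ! i) = fst (cs ! (i + 1))"
    and cl: "snd (cs ! (R - 1)) = fst (cs ! 0)" and f: "fst (cs ! 0) = x"
    by (auto simp: x0_cycles_def)
  have "\<forall>i<R. snd (cs ! i) = fst (cs ! ((i + 1) mod R))"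
  proof (intro allI impI)
    fix i assume i: "i < R"
    show "snd (cs ! i) = fst (cs ! ((i + 1) mod R))"
    proof (cases "i + 1 < R")
      case True then show ?thesis using c by simp
    next
      case False then have ir: "i = R - 1" using i by auto
      then have "i + 1 = R" using R by simp
      then have "(i + 1) mod R = 0" by simp
      note ir this
      then show ?thesis using cl by simp
    qed
  qed
  then show "cs \<in> {cs\<in>walks R. fst (cs ! 0) = x \<and> (\<forall>i<R. snd (cs ! i) = fst (cs ! ((i + 1) mod R)))}"
    using l s f by (simp add: walks_def)
next
  fix cs assume "cs \<in> {cs\<in>walks R. fst (cs ! 0) = x \<and> (\<forall>i<R. snd (cs ! i) = fst (cs ! ((i + 1) mod R)))}"
  then have l: "length cs = R" and s: "set cs \<subseteq> arcs V E" and f: "fst (cs ! 0) = x"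
    and c: "\<forall>i<R. snd (cs ! i) = fst (cs ! ((i + 1) mod R))" by (auto simp: walks_def)
  have c1: "\<forall>i. i + 1 < R \<longrightarrow> snd (cs ! i) = fst (cs ! (i + 1))"
    using c by auto
  have "snd (cs ! (R - 1)) = fst (cs ! ((R - 1 + 1) mod R))" using c R by simp
  then have cl: "snd (cs ! (R - 1)) = fst (cs ! 0)" using R by simp
  show "cs \<in> x0_cycles V E x R" using l s f c1 cl R by (simp add: x0_cycles_def)
qed

lemma sum_N0:
  assumes R: "R \<ge> 1"
  shows "(\<Sum>x\<in>V. N0 V E a b x R) = (\<Sum>cs\<in>walks R. cycle_weight V E a b cs)"
proof -
  have "(\<Sum>x\<in>V. N0 V E a b x R) = (\<Sum>x\<in>V. \<Sum>cs\<in>{cs\<in>walks R. fst (cs ! 0) = x}. cycle_weight V E a b cs)"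
  proof (rule sum.cong)
    fix x assume "x \<in> V"
    show "N0 V E a b x R = (\<Sum>cs\<in>{cs\<in>walks R. fst (cs ! 0) = x}. cycle_weight V E a b cs)"
      unfolding N0_def x0_cycles_char[OF R]
    proof (rule sum.mono_neutral_left)
      show "finite {cs\<in>walks R. fst (cs ! 0) = x}" using fin_walks by simp
      show "\<forall>cs\<in>{cs\<in>walks R. fst (cs ! 0) = x} - {cs\<in>walks R. fst (cs ! 0) = x \<and> (\<forall>i<R. snd (cs ! i) = fst (cs ! ((i + 1) mod R)))}.
          cycle_weight V E a b cs = 0"
        using cw_zero[OF R] by blast
    qed auto
  qed simp
  also have "\<dots> = (\<Sum>cs\<in>walks R. cycle_weight V E a b cs)"
  proof (rule sum.group)
    show "finite (walks R)" by (rule fin_walks)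
    show "finite V" by (rule finV)
    show "(\<lambda>cs. fst (cs ! 0)) ` walks R \<subseteq> V"
    proof
      fix y assume "y \<in> (\<lambda>cs. fst (cs ! 0)) ` walks R"
      then obtain cs where cs: "cs \<in> walks R" and y: "y = fst (cs ! 0)" by auto
      have "cs ! 0 \<in> set cs" using cs R by (auto simp: walks_def)
      then have "cs ! 0 \<in> arcs V E" using cs by (auto simp: walks_def)
      then show "y \<in> V" using y by (auto simp: arcs_def)
    qed
  qed
  finally show ?thesis .
qed


definition amap :: "('v \<Rightarrow> 'v) \<Rightarrow> ('v \<times> 'v) list \<Rightarrow> ('v \<times> 'v) list" where
  "amap h = map (\<lambda>(u,v). (h u, h v))"

lemma auto_cycles:
  assumes h: "bij_betw h V V" and pres: "\<forall>u\<in>V. \<forall>v\<in>V. E u v \<longleftrightarrow> E (h u) (h v)"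
    and cs: "cs \<in> x0_cycles V E x R"
  shows "amap h cs \<in> x0_cycles V E (h x) R"
proof -
  from cs have l: "length cs = R" and R: "R \<ge> 1" and s: "set cs \<subseteq> arcs V E"
    and c: "\<forall>i. i + 1 < R \<longrightarrow> snd (cs ! i) = fst (cs ! (i + 1))"
    and cl: "snd (cs ! (R - 1)) = fst (cs ! 0)" and f: "fst (cs ! 0) = x"
    by (auto simp: x0_cycles_def)
  have hV: "\<And>v. v \<in> V \<Longrightarrow> h v \<in> V" using h bij_betwE by blast
  have s': "set (amap h cs) \<subseteq> arcs V E"
  proof
    fix e assume "e \<in> set (amap h cs)"
    then obtain u v where uv: "(u,v) \<in> set cs" and e: "e = (h u, h v)" by (auto simp: amap_def)
    then have "u \<in> V" "v \<in> V" "E u v" using s by (auto simp: arcs_def)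
    then show "e \<in> arcs V E" using e pres hV by (auto simp: arcs_def)
  qed
  have nth: "\<And>i. i < R \<Longrightarrow> amap h cs ! i = (h (fst (cs ! i)), h (snd (cs ! i)))"
    using l by (simp add: amap_def case_prod_beta)
  have l': "length (amap h cs) = R" using l by (simp add: amap_def)
  have c': "\<forall>i. i + 1 < R \<longrightarrow> snd (amap h cs ! i) = fst (amap h cs ! (i + 1))"
    using c nth by simp
  have cl': "snd (amap h cs ! (R - 1)) = fst (amap h cs ! 0)"
    using cl nth R by simp
  have f': "fst (amap h cs ! 0) = h x" using f nth R by simp
  show ?thesis unfolding x0_cycles_def using l' R s' c' cl' f' by blast
qed

lemma auto_weight:
  assumes h: "bij_betw h V V"
    and e: "e \<in> arcs V E" and e': "e' \<in> arcs V E"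
  shows "arc_weight V E a b ((\<lambda>(u,v). (h u, h v)) e) ((\<lambda>(u,v). (h u, h v)) e') = arc_weight V E a b e e'"
proof -
  have inj: "inj_on h V" using h by (simp add: bij_betw_def)
  have hV: "\<And>v. v \<in> V \<Longrightarrow> h v \<in> V" using h bij_betwE by blast
  obtain u v where ue: "e = (u,v)" "u \<in> V" "v \<in> V" using e by (auto simp: arcs_def)
  obtain u' v' where ue': "e' = (u',v')" "u' \<in> V" "v' \<in> V" using e' by (auto simp: arcs_def)
  have d1: "deg V E (h v) = q + 1" using degV hV ue by auto
  have d2: "deg V E v = q + 1" using degV ue by auto
  have d3: "deg V E (h u') = q + 1" using degV hV ue' by auto
  have d4: "deg V E u' = q + 1" using degV ue' by auto
  have i1: "h u = h v' \<longleftrightarrow> u = v'" using inj ue ue' by (meson inj_on_eq_iff)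
  have i2: "h v = h u' \<longleftrightarrow> v = u'" using inj ue ue' by (meson inj_on_eq_iff)
  show ?thesis using ue ue' d1 d2 d3 d4 i1 i2 by (simp add: arc_weight_def)
qed

lemma auto_cw:
  assumes h: "bij_betw h V V" and s: "set cs \<subseteq> arcs V E"
  shows "cycle_weight V E a b (amap h cs) = cycle_weight V E a b cs"
proof -
  have A: "\<And>i. i < length cs \<Longrightarrow> cs ! i \<in> arcs V E" using s nth_mem by blast
  have L: "length (amap h cs) = length cs" by (simp add: amap_def)
  show ?thesis unfolding cycle_weight_def L
  proof (rule prod.cong)
    fix i assume "i \<in> {..<length cs}"
    then have i: "i < length cs" by simp
    then have pos: "0 < length cs" by (rule gr_implies_not0[THEN not0_implies_Suc, THEN exE]) simp
    have j: "(i + 1) mod length cs < length cs" using pos by (rule mod_less_divisor)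
    have "amap h cs ! i = (\<lambda>(u,v). (h u, h v)) (cs ! i)" using i by (simp add: amap_def)
    moreover have "amap h cs ! ((i + 1) mod length cs) = (\<lambda>(u,v). (h u, h v)) (cs ! ((i + 1) mod length cs))"
      using j by (simp add: amap_def del: prod.case)
    ultimately show "arc_weight V E a b (amap h cs ! i) (amap h cs ! ((i + 1) mod length cs))
        = arc_weight V E a b (cs ! i) (cs ! ((i + 1) mod length cs))"
      using auto_weight[OF h A[OF i] A[OF j]] by simp
  qed simp
qed

lemma N0_auto:
  assumes h: "bij_betw h V V" and pres: "\<forall>u\<in>V. \<forall>v\<in>V. E u v \<longleftrightarrow> E (h u) (h v)"
    and x: "x \<in> V"
  shows "N0 V E a b (h x) R = N0 V E a b x R"
proof -
  define g where "g = inv_into V h"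
  have g: "bij_betw g V V" unfolding g_def using h by (rule bij_betw_inv_into)
  have hg: "\<And>v. v \<in> V \<Longrightarrow> h (g v) = v" unfolding g_def using h
    by (meson bij_betw_inv_into_right)
  have gh: "\<And>v. v \<in> V \<Longrightarrow> g (h v) = v" unfolding g_def using h
    by (meson bij_betw_inv_into_left)
  have gV: "\<And>v. v \<in> V \<Longrightarrow> g v \<in> V" using g bij_betwE by blast
  have presg: "\<forall>u\<in>V. \<forall>v\<in>V. E u v \<longleftrightarrow> E (g u) (g v)"
    using pres gV hg by metis
  have inj: "inj_on (amap h) (x0_cycles V E x R)"
  proof (rule inj_onI)
    fix c1 c2 assume c1: "c1 \<in> x0_cycles V E x R" and c2: "c2 \<in> x0_cycles V E x R" and eq: "amap h c1 = amap h c2"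
    have "amap g (amap h c1) = c1" if "c1 \<in> x0_cycles V E x R" for c1
    proof -
      have "set c1 \<subseteq> arcs V E" using that by (simp add: x0_cycles_def)
      then have "\<forall>e\<in>set c1. fst e \<in> V \<and> snd e \<in> V" by (auto simp: arcs_def)
      then show ?thesis by (induction c1) (auto simp: amap_def gh)
    qed
    then show "c1 = c2" using c1 c2 eq by metis
  qed
  have img: "x0_cycles V E (h x) R = amap h ` x0_cycles V E x R"
  proof (intro equalityI subsetI)
    fix cs assume cs: "cs \<in> x0_cycles V E (h x) R"
    have "amap g cs \<in> x0_cycles V E (g (h x)) R" by (rule auto_cycles[OF g presg cs])
    then have m: "amap g cs \<in> x0_cycles V E x R" using gh x by simp
    have "set cs \<subseteq> arcs V E" using cs by (simp add: x0_cycles_def)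
    then have "\<forall>e\<in>set cs. fst e \<in> V \<and> snd e \<in> V" by (auto simp: arcs_def)
    then have "amap h (amap g cs) = cs" by (induction cs) (auto simp: amap_def hg)
    then show "cs \<in> amap h ` x0_cycles V E x R" using m by force
  next
    fix cs assume "cs \<in> amap h ` x0_cycles V E x R"
    then show "cs \<in> x0_cycles V E (h x) R" using auto_cycles[OF h pres] by blast
  qed
  have "N0 V E a b (h x) R = (\<Sum>cs\<in>x0_cycles V E x R. cycle_weight V E a b (amap h cs))"
    unfolding N0_def img by (rule sum.reindex[OF inj, unfolded comp_def])
  also have "\<dots> = N0 V E a b x R" unfolding N0_def
    by (intro sum.cong) (auto simp: x0_cycles_def intro!: auto_cw[OF h])
  finally show ?thesis .
qed


lemma N0_trace:
  assumes vt: "vertex_transitive V E" and x0: "x0 \<in> V"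
  shows "complex_of_real (N0 V E a b x0 (Suc r)) = mtr (Wc a b ^\<^sub>m Suc r) / of_nat n"
proof -
  have eq: "\<And>x. x \<in> V \<Longrightarrow> N0 V E a b x (Suc r) = N0 V E a b x0 (Suc r)"
  proof -
    fix x assume x: "x \<in> V"
    obtain h where h: "bij_betw h V V" and pres: "\<forall>u\<in>V. \<forall>v\<in>V. E u v \<longleftrightarrow> E (h u) (h v)"
      and hx: "h x0 = x"
      using vt x0 x unfolding vertex_transitive_def by blast
    show "N0 V E a b x (Suc r) = N0 V E a b x0 (Suc r)"
      using N0_auto[OF h pres x0] hx by simp
  qed
  have "(\<Sum>x\<in>V. N0 V E a b x (Suc r)) = of_nat n * N0 V E a b x0 (Suc r)"
    using eq by simp
  moreover have "(\<Sum>x\<in>V. N0 V E a b x (Suc r)) = (\<Sum>cs\<in>walks (Suc r). cycle_weight V E a b cs)"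
    by (rule sum_N0) simp
  ultimately have e: "(\<Sum>cs\<in>walks (Suc r). cycle_weight V E a b cs) = of_nat n * N0 V E a b x0 (Suc r)" by simp
  have "complex_of_real (of_nat n * N0 V E a b x0 (Suc r)) = complex_of_real (\<Sum>cs\<in>walks (Suc r). cycle_weight V E a b cs)"
    by (simp only: e)
  also have "\<dots> = (\<Sum>cs\<in>walks (Suc r). complex_of_real (cycle_weight V E a b cs))" by (rule of_real_sum)
  also have "\<dots> = mtr (Wc a b ^\<^sub>m Suc r)" by (rule mtr_Wpow[symmetric])
  finally have "complex_of_real (of_nat n * N0 V E a b x0 (Suc r)) = mtr (Wc a b ^\<^sub>m Suc r)" .
  moreover have "n > 0" using x0 finV card_gt_0_iff by blast
  ultimately show ?thesis by (simp add: field_simps)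
qed

end

lemma log_series_Suc:
  fixes z :: complex
  assumes "norm z < 1"
  shows "(\<lambda>r. z ^ Suc r / of_nat (Suc r)) sums (- Ln (1 - z))"
proof -
  have "(\<lambda>k. z ^ k / of_nat k) sums - Ln (1 - z)"
    using sums_minus[OF Ln_series[of "-z"]] assms by (simp add: power_minus')
  then show ?thesis using sums_Suc_iff[of "\<lambda>k. z ^ k / of_nat k"] by simp
qed


lemma H_zero:
  fixes H :: complex
  assumes e: "exp H = 1" and nH: "norm H < 2 * pi"
  shows "H = 0"
proof -
  obtain k :: int where re: "Re H = 0" and im: "Im H = of_int (2 * k) * pi"
    using e by (auto simp: exp_eq_1)
  have "\<bar>Im H\<bar> < 2 * pi" using abs_Im_le_cmod[of H] nH by linarith
  then have "\<bar>of_int k\<bar> * (2 * pi) < 1 * (2 * pi)" using im by (simp add: abs_mult)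
  then have "\<bar>of_int k\<bar> < (1::real)" using pi_gt_zero by (simp only: mult_less_cancel_right)
  then have "k = 0" by linarith
  then show ?thesis using re im by (simp add: complex_eq_iff)
qed

lemma lim_Ln1:
  assumes "(g \<longlongrightarrow> (1::complex)) F"
  shows "((\<lambda>u. Ln (g u)) \<longlongrightarrow> 0) F"
proof -
  have "(1::complex) \<notin> \<real>\<^sub>\<le>\<^sub>0" by (simp add: complex_nonpos_Reals_iff)
  from tendsto_Ln[OF assms this] show ?thesis by simp
qed

lemma lim_id0: "((\<lambda>u::complex. u) \<longlongrightarrow> 0) (nhds 0)"
  by (rule filterlim_ident)

lemma lim_lin: "((\<lambda>u::complex. 1 - c * u) \<longlongrightarrow> 1) (nhds 0)"
proof -
  have "((\<lambda>u::complex. 1 - c * u) \<longlongrightarrow> 1 - c * 0) (nhds 0)"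
    by (intro tendsto_intros lim_id0)
  then show ?thesis by simp
qed

lemma lim_quad: "((\<lambda>u::complex. (1 + s * u^2) - c * u * z) \<longlongrightarrow> 1) (nhds 0)"
proof -
  have "((\<lambda>u::complex. (1 + s * u^2) - c * u * z) \<longlongrightarrow> (1 + s * 0^2) - c * 0 * z) (nhds 0)"
    by (intro tendsto_intros lim_id0)
  then show ?thesis by simp
qed

lemma lim_sq: "((\<lambda>u::complex. 1 - s * u^2) \<longlongrightarrow> 1) (nhds 0)"
proof -
  have "((\<lambda>u::complex. 1 - s * u^2) \<longlongrightarrow> 1 - s * 0^2) (nhds 0)"
    by (intro tendsto_intros lim_id0)
  then show ?thesis by simp
qed


context RG
begin

lemma main:
  fixes a b :: real and x0 :: 'v
  assumes vt: "vertex_transitive V E" and x0: "x0 \<in> V"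
  defines "\<eta> \<equiv> (1 - real q) * a + b * (real q + 1)"
    and "\<sigma> \<equiv> b * ((1 - real q) * a + b * real q)"
  shows "\<exists>\<epsilon>>0. \<forall>u::complex. norm u < \<epsilon> \<longrightarrow>
      inverse (zeta_ab V E a b x0 u) =
        (1 - of_real (b^2) * u^2) powr complex_of_real ((real q - 1) / 2)
        * exp (spec_sum (Pmat V E) (\<lambda>z. Ln ((1 + of_real \<sigma> * u^2) - of_real \<eta> * u * z)) / of_nat n)
    \<and> inverse (zeta_ab V E a b x0 u) =
        (1 - of_real (b^2) * u^2) powr complex_of_real ((real q - 1) / 2)
        * exp (spec_sum (Lapmat V E)
            (\<lambda>z. Ln ((1 - of_real \<eta> * u + of_real \<sigma> * u^2) + of_real \<eta> * u / of_nat (q + 1) * z)) / of_nat n)"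
proof -
  obtain TW PW QW where simW: "similar_mat_wit (Wc a b) TW PW QW" and uW: "upper_triangular TW"
    and TWc: "TW \<in> carrier_mat NA NA"
    using schur_complex[OF Wc_carrier[of a b]] by blast
  have Pcar: "map_mat complex_of_real (Pmat V E) \<in> carrier_mat n n" by (simp add: Pc Am_def)
  obtain TP PP QP where simP: "similar_mat_wit (map_mat complex_of_real (Pmat V E)) TP PP QP"
    and uP: "upper_triangular TP" and TPc: "TP \<in> carrier_mat n n"
    using schur_complex[OF Pcar] by blast
  define \<mu> where "\<mu> j = TW $$ (j,j)" for j
  define lam where "lam i = TP $$ (i,i)" for i
  define K where "K = NA div 2"
  have evenNA: "even NA" by (rule detK(2))
  have NAeq: "NA = n * (q + 1)" by (rule card_arcs)
  have npos: "n > 0" using x0 finV card_gt_0_iff by blast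
  have Kreal: "real K = real n * (real q + 1) / 2"
  proof -
    have "2 * K = NA" using evenNA unfolding K_def by simp
    then have "2 * real K = real n * (real q + 1)" using NAeq by (metis of_nat_mult of_nat_Suc add.commute of_nat_numeral Suc_eq_plus1)
    then show ?thesis by simp
  qed
  have Kn: "(of_nat K - of_nat n :: complex) / of_nat n = of_real ((real q - 1) / 2)"
  proof -
    have "real K - real n = real n * ((real q - 1) / 2)" using Kreal by (simp add: field_simps)
    then have "(real K - real n) / real n = (real q - 1) / 2" using npos by simp
    then have r: "complex_of_real ((real K - real n) / real n) = complex_of_real ((real q - 1) / 2)" by (rule arg_cong)
    have e: "(of_nat K - of_nat n :: complex) / of_nat n = complex_of_real ((real K - real n) / real n)"
      by (simp add: of_real_divide)
    show ?thesis unfolding e by (rule r)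
  qed
  have cpP: "char_poly (map_mat complex_of_real (Pmat V E)) = (\<Prod>a\<leftarrow>diag_mat TP. [:- a, 1:])"
  proof -
    have "similar_mat (map_mat complex_of_real (Pmat V E)) TP" using simP by (auto simp: similar_mat_def)
    then have "char_poly (map_mat complex_of_real (Pmat V E)) = char_poly TP" by (rule char_poly_similar)
    also have "\<dots> = (\<Prod>a\<leftarrow>diag_mat TP. [:- a, 1:])" by (rule char_poly_upper_triangular[OF TPc uP])
    finally show ?thesis .
  qed
  have spP: "spec_sum (Pmat V E) g = (\<Sum>i\<in>{0..<n}. g (lam i))" for g
    unfolding spec_sum_linear[OF cpP] diag_mat_def lam_def using TPc
    by (simp add: interv_sum_list_conv_sum_set_nat)
  define xq where "xq = (of_nat (q + 1) :: complex)"
  have xq0: "xq \<noteq> 0" unfolding xq_def by (simp only: of_nat_eq_0_iff)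
  have LcP: "map_mat complex_of_real (Lapmat V E) = xq \<cdot>\<^sub>m 1\<^sub>m n + (-xq) \<cdot>\<^sub>m map_mat complex_of_real (Pmat V E)"
  proof -
    have "(-xq) \<cdot>\<^sub>m map_mat complex_of_real (Pmat V E) = (-1) \<cdot>\<^sub>m Am"
      unfolding Pc using xq0 unfolding xq_def by (intro eq_matI) (auto simp: Am_def field_simps)
    then show ?thesis unfolding Lc xq_def by simp
  qed
  have simL: "similar_mat_wit (xq \<cdot>\<^sub>m 1\<^sub>m n + (-xq) \<cdot>\<^sub>m map_mat complex_of_real (Pmat V E)) (xq \<cdot>\<^sub>m 1\<^sub>m n + (-xq) \<cdot>\<^sub>m TP) PP QP"
    by (rule sim_det_lin(2)[OF Pcar simP uP])
  have uL: "upper_triangular (xq \<cdot>\<^sub>m 1\<^sub>m n + (-xq) \<cdot>\<^sub>m TP)" by (rule sim_det_lin(3)[OF Pcar simP uP])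
  have TLc: "xq \<cdot>\<^sub>m 1\<^sub>m n + (-xq) \<cdot>\<^sub>m TP \<in> carrier_mat n n" using TPc by simp
  have cpL: "char_poly (map_mat complex_of_real (Lapmat V E)) = (\<Prod>a\<leftarrow>diag_mat (xq \<cdot>\<^sub>m 1\<^sub>m n + (-xq) \<cdot>\<^sub>m TP). [:- a, 1:])"
  proof -
    have "similar_mat (map_mat complex_of_real (Lapmat V E)) (xq \<cdot>\<^sub>m 1\<^sub>m n + (-xq) \<cdot>\<^sub>m TP)"
      using simL unfolding LcP by (auto simp: similar_mat_def)
    then have "char_poly (map_mat complex_of_real (Lapmat V E)) = char_poly (xq \<cdot>\<^sub>m 1\<^sub>m n + (-xq) \<cdot>\<^sub>m TP)"
      by (rule char_poly_similar)
    also have "\<dots> = (\<Prod>a\<leftarrow>diag_mat (xq \<cdot>\<^sub>m 1\<^sub>m n + (-xq) \<cdot>\<^sub>m TP). [:- a, 1:])"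
      by (rule char_poly_upper_triangular[OF TLc uL])
    finally show ?thesis .
  qed
  have spL: "spec_sum (Lapmat V E) g = (\<Sum>i\<in>{0..<n}. g (xq - xq * lam i))" for g
  proof -
    have "spec_sum (Lapmat V E) g = sum_list (map g (diag_mat (xq \<cdot>\<^sub>m 1\<^sub>m n + (-xq) \<cdot>\<^sub>m TP)))"
      by (rule spec_sum_linear[OF cpL])
    also have "\<dots> = (\<Sum>i\<in>{0..<n}. g ((xq \<cdot>\<^sub>m 1\<^sub>m n + (-xq) \<cdot>\<^sub>m TP) $$ (i,i)))"
      unfolding diag_mat_def using TLc TPc by (simp add: interv_sum_list_conv_sum_set_nat)
    also have "\<dots> = (\<Sum>i\<in>{0..<n}. g (xq - xq * lam i))"
      using TPc by (intro sum.cong) (auto simp: lam_def)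
    finally show ?thesis .
  qed
  have trW: "complex_of_real (N0 V E a b x0 (Suc r)) = (\<Sum>j\<in>{0..<NA}. \<mu> j ^ Suc r) / of_nat n" for r
    using N0_trace[OF vt x0, where a=a and b=b and r=r] sim_mtr_pow[OF Wc_carrier simW uW, of "Suc r"] by (simp add: \<mu>_def)
  have zeta: "zeta_ab V E a b x0 u = exp ((1 / of_nat n) * (\<Sum>j\<in>{0..<NA}. - Ln (1 - \<mu> j * u)))"
    if small: "\<forall>j\<in>{0..<NA}. norm (\<mu> j * u) < 1" for u
  proof -
    have tm: "complex_of_real (N0 V E a b x0 (Suc r) / real (Suc r)) * u ^ Suc r
        = (1 / of_nat n) * (\<Sum>j\<in>{0..<NA}. (\<mu> j * u) ^ Suc r / of_nat (Suc r))" for r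
    proof -
      have "complex_of_real (N0 V E a b x0 (Suc r) / real (Suc r)) = complex_of_real (N0 V E a b x0 (Suc r)) / of_nat (Suc r)"
        by (simp add: of_real_divide)
      also have "\<dots> = (\<Sum>j\<in>{0..<NA}. \<mu> j ^ Suc r) / of_nat n / of_nat (Suc r)" by (simp only: trW)
      finally have "complex_of_real (N0 V E a b x0 (Suc r) / real (Suc r)) * u ^ Suc r
          = (1 / of_nat n) * ((\<Sum>j\<in>{0..<NA}. \<mu> j ^ Suc r) * u ^ Suc r / of_nat (Suc r))" by simp
      also have "(\<Sum>j\<in>{0..<NA}. \<mu> j ^ Suc r) * u ^ Suc r / of_nat (Suc r) = (\<Sum>j\<in>{0..<NA}. (\<mu> j * u) ^ Suc r / of_nat (Suc r))"
      proof -
        have "(\<Sum>j\<in>{0..<NA}. (\<mu> j * u) ^ Suc r / of_nat (Suc r)) = (\<Sum>j\<in>{0..<NA}. \<mu> j ^ Suc r * (u ^ Suc r / of_nat (Suc r)))"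
          by (intro sum.cong) (simp_all add: power_mult_distrib)
        also have "\<dots> = (\<Sum>j\<in>{0..<NA}. \<mu> j ^ Suc r) * (u ^ Suc r / of_nat (Suc r))"
          by (rule sum_distrib_right[symmetric])
        finally show ?thesis by simp
      qed
      finally show ?thesis .
    qed
    have "(\<lambda>r. (1 / of_nat n) * (\<Sum>j\<in>{0..<NA}. (\<mu> j * u) ^ Suc r / of_nat (Suc r))) sums ((1 / of_nat n) * (\<Sum>j\<in>{0..<NA}. - Ln (1 - \<mu> j * u)))"
      by (intro sums_mult sums_sum log_series_Suc) (use small in auto)
    then have "(\<lambda>r. complex_of_real (N0 V E a b x0 (Suc r) / real (Suc r)) * u ^ Suc r) sums ((1 / of_nat n) * (\<Sum>j\<in>{0..<NA}. - Ln (1 - \<mu> j * u)))"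
      by (simp only: tm)
    then show ?thesis unfolding zeta_ab_def by (simp add: sums_iff)
  qed
  define F where "F i u = (1 + of_real \<sigma> * u^2) - of_real \<eta> * u * lam i" for i u
  define L where "L u = Ln (1 - of_real (b^2) * u^2)" for u
  define H where "H u = (\<Sum>j\<in>{0..<NA}. Ln (1 - \<mu> j * u)) - (of_nat K - of_nat n) * L u - (\<Sum>i\<in>{0..<n}. Ln (F i u))" for u
  have Hzero: "H u = 0"
    if c1: "\<forall>j\<in>{0..<NA}. norm (\<mu> j * u) < 1" and c2: "1 - of_real (b^2) * u^2 \<noteq> 0"
      and c3: "\<forall>i\<in>{0..<n}. F i u \<noteq> 0" and c4: "norm (H u) < 2 * pi" for u
  proof -
    define d where "d = 1 - of_real (b^2) * u^2"
    have nz1: "1 - \<mu> j * u \<noteq> 0" if "j \<in> {0..<NA}" for j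
    proof
      assume "1 - \<mu> j * u = 0"
      then have "\<mu> j * u = 1" by simp
      then show False using c1 that by fastforce
    qed
    have eSW: "exp (\<Sum>j\<in>{0..<NA}. Ln (1 - \<mu> j * u)) = (\<Prod>j\<in>{0..<NA}. 1 - \<mu> j * u)"
      unfolding exp_sum[OF finite_atLeastLessThan] by (rule prod.cong[OF refl], rule exp_Ln, rule nz1)
    have eSF: "exp (\<Sum>i\<in>{0..<n}. Ln (F i u)) = (\<Prod>i\<in>{0..<n}. F i u)"
      using c3 by (simp add: exp_sum)
    have eL: "exp (of_nat k * L u) = d ^ k" for k
      unfolding exp_of_nat_mult L_def using c2 by (simp add: d_def)
    have Hs: "H u = ((\<Sum>j\<in>{0..<NA}. Ln (1 - \<mu> j * u)) + of_nat n * L u) - (of_nat K * L u + (\<Sum>i\<in>{0..<n}. Ln (F i u)))"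
      unfolding H_def by (simp add: algebra_simps)
    have "exp (H u) = ((\<Prod>j\<in>{0..<NA}. 1 - \<mu> j * u) * d ^ n) / (d ^ K * (\<Prod>i\<in>{0..<n}. F i u))"
      unfolding Hs exp_diff exp_add eSW eSF eL by simp
    also have "(\<Prod>j\<in>{0..<NA}. 1 - \<mu> j * u) * d ^ n = d ^ K * (\<Prod>i\<in>{0..<n}. F i u)"
    proof -
      have di: "(\<Prod>j\<in>{0..<NA}. 1 + (-u) * TW $$ (j,j)) * (1 - (of_real b * u)^2) ^ n
         = (1 - (of_real b * u)^2) ^ (NA div 2) * (\<Prod>i\<in>{0..<n}. (1 + of_real \<sigma> * u^2) + (- of_real \<eta> * u) * TP $$ (i,i))"
        unfolding \<sigma>_def \<eta>_def by (rule det_identity[OF simW uW simP uP])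
      have p1: "(\<Prod>j\<in>{0..<NA}. 1 + (-u) * TW $$ (j,j)) = (\<Prod>j\<in>{0..<NA}. 1 - \<mu> j * u)"
        by (intro prod.cong) (auto simp: \<mu>_def algebra_simps)
      have p2: "(\<Prod>i\<in>{0..<n}. (1 + of_real \<sigma> * u^2) + (- of_real \<eta> * u) * TP $$ (i,i)) = (\<Prod>i\<in>{0..<n}. F i u)"
        by (intro prod.cong) (auto simp: F_def lam_def algebra_simps)
      have p3: "1 - (of_real b * u)^2 = d" by (simp add: d_def power_mult_distrib)
      show ?thesis using di unfolding p1 p2 p3 K_def .
    qed
    also have "d ^ K * (\<Prod>i\<in>{0..<n}. F i u) \<noteq> 0" using c2 c3 by (simp add: d_def)
    then have "(d ^ K * (\<Prod>i\<in>{0..<n}. F i u)) / (d ^ K * (\<Prod>i\<in>{0..<n}. F i u)) = 1" by simp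
    finally have "exp (H u) = 1" .
    then show "H u = 0" using c4 by (rule H_zero)
  qed
  have ev1: "\<forall>\<^sub>F u in nhds 0. \<forall>j\<in>{0..<NA}. norm (\<mu> j * u) < 1"
  proof (rule eventually_ball_finite, simp, intro ballI)
    fix j
    have "((\<lambda>u. norm (\<mu> j * u)) \<longlongrightarrow> norm (\<mu> j * 0)) (nhds 0)"
      by (intro tendsto_intros lim_id0)
    then have "((\<lambda>u. norm (\<mu> j * u)) \<longlongrightarrow> 0) (nhds 0)" by simp
    then show "\<forall>\<^sub>F u in nhds 0. norm (\<mu> j * u) < 1" by (rule order_tendstoD(2)) simp
  qed
  have ev2: "\<forall>\<^sub>F u in nhds (0::complex). 1 - of_real (b^2) * u^2 \<noteq> 0"
    using tendsto_imp_eventually_ne[OF lim_sq[of "of_real (b^2)"], of 0] by simp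
  have ev3: "\<forall>\<^sub>F u in nhds 0. \<forall>i\<in>{0..<n}. F i u \<noteq> 0"
  proof (rule eventually_ball_finite, simp, intro ballI)
    fix i
    show "\<forall>\<^sub>F u in nhds 0. F i u \<noteq> 0"
      unfolding F_def using tendsto_imp_eventually_ne[OF lim_quad[of "of_real \<sigma>" "of_real \<eta>" "lam i"], of 0] by simp
  qed
  have limH: "(H \<longlongrightarrow> 0) (nhds 0)"
  proof -
    have "((\<lambda>u. (\<Sum>j\<in>{0..<NA}. Ln (1 - \<mu> j * u)) - (of_nat K - of_nat n) * L u - (\<Sum>i\<in>{0..<n}. Ln (F i u)))
        \<longlongrightarrow> (\<Sum>j\<in>{0..<NA}. 0) - (of_nat K - of_nat n) * 0 - (\<Sum>i\<in>{0..<n}. 0)) (nhds 0)"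
      unfolding L_def F_def by (intro tendsto_diff tendsto_sum tendsto_mult tendsto_const lim_Ln1 lim_lin lim_sq lim_quad)
    then show ?thesis unfolding H_def[abs_def] by simp
  qed
  have ev4: "\<forall>\<^sub>F u in nhds 0. norm (H u) < 2 * pi"
  proof -
    have "((\<lambda>u. norm (H u)) \<longlongrightarrow> 0) (nhds 0)" using tendsto_norm[OF limH] by simp
    then show ?thesis by (rule order_tendstoD(2)) simp
  qed
  have ev: "\<forall>\<^sub>F u in nhds 0. (\<forall>j\<in>{0..<NA}. norm (\<mu> j * u) < 1) \<and> 1 - of_real (b^2) * u^2 \<noteq> 0
      \<and> (\<forall>i\<in>{0..<n}. F i u \<noteq> 0) \<and> norm (H u) < 2 * pi"
    by (intro eventually_conj ev1 ev2 ev3 ev4)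
  then obtain \<epsilon> where \<epsilon>: "\<epsilon> > 0" and P: "\<And>u. dist u 0 < \<epsilon> \<Longrightarrow> (\<forall>j\<in>{0..<NA}. norm (\<mu> j * u) < 1) \<and> 1 - of_real (b^2) * u^2 \<noteq> 0
      \<and> (\<forall>i\<in>{0..<n}. F i u \<noteq> 0) \<and> norm (H u) < 2 * pi"
    unfolding eventually_nhds_metric by blast
  show ?thesis
  proof (intro exI[of _ \<epsilon>] conjI allI impI \<epsilon>)
    fix u :: complex assume nu: "norm u < \<epsilon>"
    then have c1: "\<forall>j\<in>{0..<NA}. norm (\<mu> j * u) < 1" and c2: "1 - of_real (b^2) * u^2 \<noteq> 0"
      and c3: "\<forall>i\<in>{0..<n}. F i u \<noteq> 0" and c4: "norm (H u) < 2 * pi" using P[of u] by auto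
    have H0: "H u = 0" by (rule Hzero[OF c1 c2 c3 c4])
    define SF where "SF = (\<Sum>i\<in>{0..<n}. Ln (F i u))"
    define SW where "SW = (\<Sum>j\<in>{0..<NA}. Ln (1 - \<mu> j * u))"
    have SWe: "SW = (of_nat K - of_nat n) * L u + SF" using H0 unfolding H_def SW_def SF_def by (simp add: algebra_simps)
    have nn: "(of_nat n :: complex) \<noteq> 0" using npos by simp
    have inv: "inverse (zeta_ab V E a b x0 u) = exp (SW / of_nat n)"
    proof -
      have "inverse (zeta_ab V E a b x0 u) = exp (- ((1 / of_nat n) * (\<Sum>j\<in>{0..<NA}. - Ln (1 - \<mu> j * u))))"
        unfolding zeta[OF c1] by (simp add: exp_minus)
      also have "- ((1 / of_nat n) * (\<Sum>j\<in>{0..<NA}. - Ln (1 - \<mu> j * u))) = SW / of_nat n"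
        unfolding SW_def by (simp add: sum_negf)
      finally show ?thesis .
    qed
    have key: "exp (SW / of_nat n) = (1 - of_real (b^2) * u^2) powr complex_of_real ((real q - 1) / 2) * exp (SF / of_nat n)"
    proof -
      have "SW / of_nat n = ((of_nat K - of_nat n) / of_nat n) * L u + SF / of_nat n"
        unfolding SWe using nn by (simp add: field_simps)
      also have "\<dots> = complex_of_real ((real q - 1) / 2) * L u + SF / of_nat n" by (simp only: Kn)
      finally have "exp (SW / of_nat n) = exp (complex_of_real ((real q - 1) / 2) * L u) * exp (SF / of_nat n)"
        by (simp add: exp_add)
      also have "exp (complex_of_real ((real q - 1) / 2) * L u) = (1 - of_real (b^2) * u^2) powr complex_of_real ((real q - 1) / 2)"
        unfolding L_def powr_def using c2 by simp
      finally show ?thesis .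
    qed
    have s1: "spec_sum (Pmat V E) (\<lambda>z. Ln ((1 + of_real \<sigma> * u^2) - of_real \<eta> * u * z)) = SF"
      unfolding spP SF_def F_def ..
    have s2: "spec_sum (Lapmat V E) (\<lambda>z. Ln ((1 - of_real \<eta> * u + of_real \<sigma> * u^2) + of_real \<eta> * u / of_nat (q + 1) * z)) = SF"
      unfolding spL SF_def F_def
    proof (rule sum.cong)
      fix i
      have "(1 - of_real \<eta> * u + of_real \<sigma> * u^2) + of_real \<eta> * u / of_nat (q + 1) * (xq - xq * lam i)
          = (1 + of_real \<sigma> * u^2) - of_real \<eta> * u * lam i"
        using xq0 unfolding xq_def by (simp add: field_simps)
      then show "Ln ((1 - of_real \<eta> * u + of_real \<sigma> * u^2) + of_real \<eta> * u / of_nat (q + 1) * (xq - xq * lam i))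
          = Ln ((1 + of_real \<sigma> * u^2) - of_real \<eta> * u * lam i)" by (rule arg_cong)
    qed simp
    show "inverse (zeta_ab V E a b x0 u) =
        (1 - of_real (b^2) * u^2) powr complex_of_real ((real q - 1) / 2)
        * exp (spec_sum (Pmat V E) (\<lambda>z. Ln ((1 + of_real \<sigma> * u^2) - of_real \<eta> * u * z)) / of_nat n)"
      unfolding inv s1 key ..
    show "inverse (zeta_ab V E a b x0 u) =
        (1 - of_real (b^2) * u^2) powr complex_of_real ((real q - 1) / 2)
        * exp (spec_sum (Lapmat V E)
            (\<lambda>z. Ln ((1 - of_real \<eta> * u + of_real \<sigma> * u^2) + of_real \<eta> * u / of_nat (q + 1) * z)) / of_nat n)"
      unfolding inv s2 key ..
  qed
qed

end



theorem theorem7: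
  fixes V :: "'v set" and E :: "'v \<Rightarrow> 'v \<Rightarrow> bool" and q :: nat and a b :: real and x0 :: 'v
  assumes "simple_graph V E" and "connected_graph V E" and "vertex_transitive V E"
    and "regular V E (q + 1)"
    and "0 \<le> a" and "a \<le> 1"
    and "x0 \<in> V"
  defines "\<eta> \<equiv> (1 - real q) * a + b * (real q + 1)"
    and "\<sigma> \<equiv> b * ((1 - real q) * a + b * real q)"
    and "n \<equiv> card V"
  shows "\<exists>\<epsilon>>0. \<forall>u::complex. norm u < \<epsilon> \<longrightarrow>
      inverse (zeta_ab V E a b x0 u) =
        (1 - of_real (b^2) * u^2) powr complex_of_real ((real q - 1) / 2)
        * exp (spec_sum (Pmat V E) (\<lambda>z. Ln ((1 + of_real \<sigma> * u^2) - of_real \<eta> * u * z)) / of_nat n)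
    \<and> inverse (zeta_ab V E a b x0 u) =
        (1 - of_real (b^2) * u^2) powr complex_of_real ((real q - 1) / 2)
        * exp (spec_sum (Lapmat V E)
            (\<lambda>z. Ln ((1 - of_real \<eta> * u + of_real \<sigma> * u^2) + of_real \<eta> * u / of_nat (q + 1) * z)) / of_nat n)"
proof -
  interpret RG V E q by (unfold_locales) (rule assms(1), rule assms(4))
  show ?thesis unfolding \<eta>_def \<sigma>_def n_def by (rule main[OF assms(3) assms(7)])
qed

end
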